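(* Let $\Lambda$ be a unital commutative ring, $q\ge1$ an integer, $\mathfrak g$ a Lie algebra over $\Lambda$ and $\mathfrak h$ an ideal of $\mathfrak g$. There is a Lie action of $\mathfrak g$ on $\mathfrak h\otimes^q\mathfrak g$ given on generators by ${}^{g'}(h\otimes g)=[g',h]\otimes g+h\otimes[g',g]$ and ${}^{g}\{h\}=\{[g,h]\}$, and a Lie action of $\mathfrak g$ on $\mathfrak h\wedge^q\mathfrak g$ given by ${}^{g'}(h\wedge g)=[g',h]\wedge g+h\wedge[g',g]$ and ${}^{g}\{h\}=\{[g,h]\}$. With these actions, the homomorphisms $\xi^{\otimes}\colon\mathfrak h\otimes^q\mathfrak g\to\mathfrak g$ and $\xi^{\wedge}\colon\mathfrak h\wedge^q\mathfrak g\to\mathfrak g$ are $q$-crossed $\mathfrak g$-modules.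
   Context: All Lie algebras are over $\Lambda$. A Lie action of $\mathfrak g$ on $\mathfrak h$ is a $\Lambda$-bilinear map $(g,h)\mapsto{}^gh$ with ${}^{[g,g']}h={}^g({}^{g'}h)-{}^{g'}({}^gh)$ and ${}^g[h,h']=[{}^gh,h']+[h,{}^gh']$. A $q$-crossed $\mathfrak g$-module is a Lie homomorphism $\mu\colon\mathfrak k\to\mathfrak g$ with a Lie action of $\mathfrak g$ on $\mathfrak k$ such that $\mu({}^gk)=[g,\mu(k)]$, ${}^{\mu(k)}k'=[k,k']$ and $qk=0$ for all $g\in\mathfrak g$, $k,k'\in\mathfrak k$, $k\in\operatorname{Ker}\mu$ respectively. The non-abelian $q$-tensor product $\mathfrak h\otimes^q\mathfrak g$ is the Lie algebra generated by symbols $h\otimes g$ and $\{h\}$ ($h\in\mathfrak h$, $g\in\mathfrak g$) subject to, for all $h,h'\in\mathfrak h$, $g,g'\in\mathfrak g$, $\lambda,\lambda'\in\Lambda$: (1) $\lambda(h\otimes g)=\lambda h\otimes g=h\otimes\lambda g$; (2) $(h+h')\otimes g=h\otimes g+h'\otimes g$; (3) $h\otimes(g+g')=h\otimes g+h\otimes g'$; (4) $[h,h']\otimes g=h\otimes[h',g]-h'\otimes[h,g]$; (5) $h\otimes[g,g']=[g',h]\otimes g-[g,h]\otimes g'$; (6) $[h\otimes g,h'\otimes g']=[h,g]\otimes[h',g']$; (7) $[\{h'\},h\otimes g]=[qh',h]\otimes g+h\otimes[qh',g]$; (8) $\{\lambda h+\lambda'h'\}=\lambda\{h\}+\lambda'\{h'\}$;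 (9) $[\{h\},\{h'\}]=qh\otimes qh'$; (10) $\{[h,g]\}=q(h\otimes g)$. The $q$-exterior product $\mathfrak h\wedge^q\mathfrak g$ is its quotient by the relations $h\otimes h=0$ ($h\in\mathfrak h$), images written $h\wedge g,\{h\}$. The homomorphism $\xi^{\otimes}$ is given by $\xi^{\otimes}(h\otimes g)=[h,g]$, $\xi^{\otimes}(\{h\})=qh$, and $\xi^{\wedge}$ is the induced map on $\mathfrak h\wedge^q\mathfrak g$. *)

theory Defs
  imports Main "HOL-Library.Poly_Mapping"
begin

record ('a, 'r) lie =
  lcarrier :: "'a set"
  ladd :: "'a \<Rightarrow> 'a \<Rightarrow> 'a"
  lzero :: "'a"
  lneg :: "'a \<Rightarrow> 'a"
  lsmult :: "'r \<Rightarrow> 'a \<Rightarrow> 'a"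
  lbr :: "'a \<Rightarrow> 'a \<Rightarrow> 'a"

definition lie_algebra :: "('a, 'r::comm_ring_1, 'm) lie_scheme \<Rightarrow> bool" where
  "lie_algebra L \<longleftrightarrow>
     (let C = lcarrier L; ad = ladd L; z = lzero L; ng = lneg L; sm = lsmult L; b = lbr L in
       z \<in> C \<and>
       (\<forall>x\<in>C. \<forall>y\<in>C. ad x y \<in> C \<and> b x y \<in> C) \<and>
       (\<forall>x\<in>C. ng x \<in> C) \<and> (\<forall>c. \<forall>x\<in>C. sm c x \<in> C) \<and>
       (\<forall>x\<in>C. \<forall>y\<in>C. \<forall>w\<in>C. ad (ad x y) w = ad x (ad y w)) \<and>
       (\<forall>x\<in>C. \<forall>y\<in>C. ad x y = ad y x) \<and>
       (\<forall>x\<in>C. ad z x = x) \<and>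
       (\<forall>x\<in>C. ad (ng x) x = z) \<and>
       (\<forall>c. \<forall>x\<in>C. \<forall>y\<in>C. sm c (ad x y) = ad (sm c x) (sm c y)) \<and>
       (\<forall>c d. \<forall>x\<in>C. sm (c + d) x = ad (sm c x) (sm d x)) \<and>
       (\<forall>c d. \<forall>x\<in>C. sm (c * d) x = sm c (sm d x)) \<and>
       (\<forall>x\<in>C. sm 1 x = x) \<and>
       (\<forall>x\<in>C. \<forall>y\<in>C. \<forall>w\<in>C. b (ad x y) w = ad (b x w) (b y w)) \<and>
       (\<forall>x\<in>C. \<forall>y\<in>C. \<forall>w\<in>C. b x (ad y w) = ad (b x y) (b x w)) \<and>
       (\<forall>c. \<forall>x\<in>C. \<forall>y\<in>C. b (sm c x) y = sm c (b x y) \<and> b x (sm c y) = sm c (b x y)) \<and>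
       (\<forall>x\<in>C. b x x = z) \<and>
       (\<forall>x\<in>C. \<forall>y\<in>C. \<forall>w\<in>C. ad (b x (b y w)) (ad (b y (b w x)) (b w (b x y))) = z))"

definition lie_ideal :: "('a, 'r::comm_ring_1, 'm) lie_scheme \<Rightarrow> 'a set \<Rightarrow> bool" where
  "lie_ideal L H \<longleftrightarrow> H \<subseteq> lcarrier L \<and> lzero L \<in> H \<and>
     (\<forall>x\<in>H. \<forall>y\<in>H. ladd L x y \<in> H) \<and> (\<forall>x\<in>H. lneg L x \<in> H) \<and>
     (\<forall>c. \<forall>x\<in>H. lsmult L c x \<in> H) \<and>
     (\<forall>g\<in>lcarrier L. \<forall>h\<in>H. lbr L g h \<in> H)"

definition lie_hom :: "('a, 'r::comm_ring_1, 'm) lie_scheme \<Rightarrow> ('b, 'r, 'n) lie_scheme \<Rightarrow> ('a \<Rightarrow> 'b) \<Rightarrow> bool" where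
  "lie_hom K L f \<longleftrightarrow> (\<forall>x\<in>lcarrier K. f x \<in> lcarrier L) \<and>
     (\<forall>x\<in>lcarrier K. \<forall>y\<in>lcarrier K. f (ladd K x y) = ladd L (f x) (f y)) \<and>
     (\<forall>c. \<forall>x\<in>lcarrier K. f (lsmult K c x) = lsmult L c (f x)) \<and>
     (\<forall>x\<in>lcarrier K. \<forall>y\<in>lcarrier K. f (lbr K x y) = lbr L (f x) (f y))"

definition lie_action :: "('a, 'r::comm_ring_1, 'm) lie_scheme \<Rightarrow> ('b, 'r, 'n) lie_scheme \<Rightarrow> ('a \<Rightarrow> 'b \<Rightarrow> 'b) \<Rightarrow> bool" where
  "lie_action G K act \<longleftrightarrow>
     (\<forall>g\<in>lcarrier G. \<forall>k\<in>lcarrier K. act g k \<in> lcarrier K) \<and>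
     (\<forall>g\<in>lcarrier G. \<forall>g'\<in>lcarrier G. \<forall>k\<in>lcarrier K. act (ladd G g g') k = ladd K (act g k) (act g' k)) \<and>
     (\<forall>g\<in>lcarrier G. \<forall>k\<in>lcarrier K. \<forall>k'\<in>lcarrier K. act g (ladd K k k') = ladd K (act g k) (act g k')) \<and>
     (\<forall>c. \<forall>g\<in>lcarrier G. \<forall>k\<in>lcarrier K. act (lsmult G c g) k = lsmult K c (act g k) \<and> act g (lsmult K c k) = lsmult K c (act g k)) \<and>
     (\<forall>g\<in>lcarrier G. \<forall>g'\<in>lcarrier G. \<forall>k\<in>lcarrier K.
        act (lbr G g g') k = ladd K (act g (act g' k)) (lneg K (act g' (act g k)))) \<and>
     (\<forall>g\<in>lcarrier G. \<forall>k\<in>lcarrier K. \<forall>k'\<in>lcarrier K.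
        act g (lbr K k k') = ladd K (lbr K (act g k) k') (lbr K k (act g k')))"

definition q_crossed_module :: "int \<Rightarrow> ('b, 'r::comm_ring_1, 'n) lie_scheme \<Rightarrow> ('a, 'r, 'm) lie_scheme \<Rightarrow> ('b \<Rightarrow> 'a) \<Rightarrow> ('a \<Rightarrow> 'b \<Rightarrow> 'b) \<Rightarrow> bool" where
  "q_crossed_module q K G \<mu> act \<longleftrightarrow>
     lie_algebra K \<and> lie_algebra G \<and> lie_hom K G \<mu> \<and> lie_action G K act \<and>
     (\<forall>g\<in>lcarrier G. \<forall>k\<in>lcarrier K. \<mu> (act g k) = lbr G g (\<mu> k)) \<and>
     (\<forall>k\<in>lcarrier K. \<forall>k'\<in>lcarrier K. act (\<mu> k) k' = lbr K k k') \<and>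
     (\<forall>k\<in>lcarrier K. \<mu> k = lzero G \<longrightarrow> lsmult K (of_int q) k = lzero K)"

text \<open>Free non-associative algebra over 'r on generators 'x: finitely supported
  'r-linear combinations of binary trees (magma words).\<close>
datatype 'x mtree = Leaf 'x | Node "'x mtree" "'x mtree"

type_synonym ('x, 'r) fm = "'x mtree \<Rightarrow>\<^sub>0 'r"

definition fm_gen :: "'x \<Rightarrow> ('x, 'r::comm_ring_1) fm" where
  "fm_gen x = Poly_Mapping.single (Leaf x) 1"

definition fm_smult :: "'r::comm_ring_1 \<Rightarrow> ('x, 'r) fm \<Rightarrow> ('x, 'r) fm" where
  "fm_smult c p = (\<Sum>t\<in>Poly_Mapping.keys p. Poly_Mapping.single t (c * Poly_Mapping.lookup p t))"

definition fm_br :: "('x, 'r::comm_ring_1) fm \<Rightarrow> ('x, 'r) fm \<Rightarrow> ('x, 'r) fm" where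
  "fm_br p p' = (\<Sum>s\<in>Poly_Mapping.keys p. \<Sum>t\<in>Poly_Mapping.keys p'.
       Poly_Mapping.single (Node s t) (Poly_Mapping.lookup p s * Poly_Mapping.lookup p' t))"

inductive_set fm_ideal :: "('x, 'r::comm_ring_1) fm set \<Rightarrow> ('x, 'r) fm set" for R where
  base: "r \<in> R \<Longrightarrow> r \<in> fm_ideal R"
| zero: "0 \<in> fm_ideal R"
| add: "a \<in> fm_ideal R \<Longrightarrow> b \<in> fm_ideal R \<Longrightarrow> a + b \<in> fm_ideal R"
| smult: "a \<in> fm_ideal R \<Longrightarrow> fm_smult c a \<in> fm_ideal R"
| brl: "a \<in> fm_ideal R \<Longrightarrow> fm_br x a \<in> fm_ideal R"
| brr: "a \<in> fm_ideal R \<Longrightarrow> fm_br a x \<in> fm_ideal R"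

definition lie_rels :: "('x, 'r::comm_ring_1) fm set" where
  "lie_rels = {fm_br a a | a. True} \<union>
     {fm_br a (fm_br b c) + fm_br b (fm_br c a) + fm_br c (fm_br a b) | a b c. True}"

definition fm_class :: "('x, 'r::comm_ring_1) fm set \<Rightarrow> ('x, 'r) fm \<Rightarrow> ('x, 'r) fm set" where
  "fm_class I x = {y. x - y \<in> I}"

definition fm_rep :: "('x, 'r::comm_ring_1) fm set \<Rightarrow> ('x, 'r) fm" where
  "fm_rep A = (SOME x. x \<in> A)"

text \<open>The Lie algebra with generators 'x and relations R (elements of the free algebra,
  each meaning "= 0"): free algebra modulo the ideal generated by R and the Lie relations.\<close>
definition presented_lie :: "('x, 'r::comm_ring_1) fm set \<Rightarrow> (('x, 'r) fm set, 'r) lie" where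
  "presented_lie R = (let I = fm_ideal (lie_rels \<union> R) in
     \<lparr> lcarrier = range (fm_class I),
       ladd = (\<lambda>A B. fm_class I (fm_rep A + fm_rep B)),
       lzero = fm_class I 0,
       lneg = (\<lambda>A. fm_class I (- fm_rep A)),
       lsmult = (\<lambda>c A. fm_class I (fm_smult c (fm_rep A))),
       lbr = (\<lambda>A B. fm_class I (fm_br (fm_rep A) (fm_rep B))) \<rparr>)"

definition presented_gen :: "('x, 'r::comm_ring_1) fm set \<Rightarrow> 'x \<Rightarrow> ('x, 'r) fm set" where
  "presented_gen R x = fm_class (fm_ideal (lie_rels \<union> R)) (fm_gen x)"

text \<open>Generator symbols: QT h g stands for h \<otimes> g, QC h stands for {h}.\<close>
datatype 'a qgen = QT 'a 'a | QC 'a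

definition qgens :: "('a, 'r, 'm) lie_scheme \<Rightarrow> 'a set \<Rightarrow> 'a qgen set" where
  "qgens G H = {QT h g | h g. h \<in> H \<and> g \<in> lcarrier G} \<union> {QC h | h. h \<in> H}"

definition qtensor_rels :: "('a, 'r::comm_ring_1, 'm) lie_scheme \<Rightarrow> 'a set \<Rightarrow> int \<Rightarrow> ('a qgen, 'r) fm set" where
  "qtensor_rels G H q = (let C = lcarrier G; pl = ladd G; sm = lsmult G; b = lbr G;
      t = (\<lambda>h g. fm_gen (QT h g) :: ('a qgen, 'r) fm); cu = (\<lambda>h. fm_gen (QC h) :: ('a qgen, 'r) fm);
      qq = (\<lambda>h. sm (of_int q) h) in
     \<comment> \<open>generators outside the admissible range are killed\<close>
     {fm_gen y | y. y \<notin> qgens G H} \<union>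
     \<comment> \<open>(1)\<close>
     {fm_smult c (t h g) - t (sm c h) g | c h g. h \<in> H \<and> g \<in> C} \<union>
     {fm_smult c (t h g) - t h (sm c g) | c h g. h \<in> H \<and> g \<in> C} \<union>
     \<comment> \<open>(2)\<close>
     {t (pl h h') g - (t h g + t h' g) | h h' g. h \<in> H \<and> h' \<in> H \<and> g \<in> C} \<union>
     \<comment> \<open>(3)\<close>
     {t h (pl g g') - (t h g + t h g') | h g g'. h \<in> H \<and> g \<in> C \<and> g' \<in> C} \<union>
     \<comment> \<open>(4)\<close>
     {t (b h h') g - (t h (b h' g) - t h' (b h g)) | h h' g. h \<in> H \<and> h' \<in> H \<and> g \<in> C} \<union>
     \<comment> \<open>(5)\<close>
     {t h (b g g') - (t (b g' h) g - t (b g h) g') | h g g'. h \<in> H \<and> g \<in> C \<and> g' \<in> C} \<union>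
     \<comment> \<open>(6)\<close>
     {fm_br (t h g) (t h' g') - t (b h g) (b h' g') | h g h' g'. h \<in> H \<and> g \<in> C \<and> h' \<in> H \<and> g' \<in> C} \<union>
     \<comment> \<open>(7)\<close>
     {fm_br (cu h') (t h g) - (t (b (qq h') h) g + t h (b (qq h') g)) | h' h g. h' \<in> H \<and> h \<in> H \<and> g \<in> C} \<union>
     \<comment> \<open>(8)\<close>
     {cu (pl (sm c h) (sm c' h')) - (fm_smult c (cu h) + fm_smult c' (cu h')) | c c' h h'. h \<in> H \<and> h' \<in> H} \<union>
     \<comment> \<open>(9)\<close>
     {fm_br (cu h) (cu h') - t (qq h) (qq h') | h h'. h \<in> H \<and> h' \<in> H} \<union>
     \<comment> \<open>(10)\<close>
     {cu (b h g) - fm_smult (of_int q) (t h g) | h g. h \<in> H \<and> g \<in> C})"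

definition qwedge_rels :: "('a, 'r::comm_ring_1, 'm) lie_scheme \<Rightarrow> 'a set \<Rightarrow> int \<Rightarrow> ('a qgen, 'r) fm set" where
  "qwedge_rels G H q = qtensor_rels G H q \<union> {fm_gen (QT h h) | h. h \<in> H}"

definition qtensor where "qtensor G H q = presented_lie (qtensor_rels G H q)"
definition qwedge where "qwedge G H q = presented_lie (qwedge_rels G H q)"
definition tens where "tens G H q h g = presented_gen (qtensor_rels G H q) (QT h g)"
definition tcurl where "tcurl G H q h = presented_gen (qtensor_rels G H q) (QC h)"
definition wedg where "wedg G H q h g = presented_gen (qwedge_rels G H q) (QT h g)"
definition wcurl where "wcurl G H q h = presented_gen (qwedge_rels G H q) (QC h)"

end

theory Submission
  imports Defs "HOL-Algebra.Ring"
begin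

section \<open>Free algebra basics\<close>

abbreviation tree :: "'x mtree \<Rightarrow> ('x, 'r::comm_ring_1) fm" where
  "tree t \<equiv> Poly_Mapping.single t 1"

lemma lookup_fm_smult [simp]:
  "Poly_Mapping.lookup (fm_smult c p) u = c * Poly_Mapping.lookup p u"
proof -
  have "Poly_Mapping.lookup (fm_smult c p) u =
        (\<Sum>t\<in>Poly_Mapping.keys p. (c * Poly_Mapping.lookup p t when t = u))"
    by (simp add: fm_smult_def lookup_sum lookup_single)
  also have "\<dots> = c * Poly_Mapping.lookup p u"
    by (cases "u \<in> Poly_Mapping.keys p") (auto simp: when_def in_keys_iff)
  finally show ?thesis .
qed

lemma lookup_fm_br:
  "Poly_Mapping.lookup (fm_br p p') u =
     (case u of Leaf x \<Rightarrow> 0 | Node s t \<Rightarrow> Poly_Mapping.lookup p s * Poly_Mapping.lookup p' t)"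
proof -
  have "Poly_Mapping.lookup (fm_br p p') u =
        (\<Sum>s\<in>Poly_Mapping.keys p. \<Sum>t\<in>Poly_Mapping.keys p'.
           (Poly_Mapping.lookup p s * Poly_Mapping.lookup p' t when Node s t = u))"
    by (simp add: fm_br_def lookup_sum lookup_single)
  also have "\<dots> = (case u of Leaf x \<Rightarrow> 0 | Node s t \<Rightarrow> Poly_Mapping.lookup p s * Poly_Mapping.lookup p' t)"
  proof (cases u)
    case (Leaf x)
    then show ?thesis by (simp add: when_def)
  next
    case (Node a b)
    have "(\<Sum>s\<in>Poly_Mapping.keys p. \<Sum>t\<in>Poly_Mapping.keys p'.
           (Poly_Mapping.lookup p s * Poly_Mapping.lookup p' t when Node s t = u))
        = (\<Sum>s\<in>Poly_Mapping.keys p. (Poly_Mapping.lookup p s * Poly_Mapping.lookup p' b when s = a))"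
    proof (rule sum.cong[OF refl])
      fix s assume "s \<in> Poly_Mapping.keys p"
      show "(\<Sum>t\<in>Poly_Mapping.keys p'. (Poly_Mapping.lookup p s * Poly_Mapping.lookup p' t when Node s t = u))
          = (Poly_Mapping.lookup p s * Poly_Mapping.lookup p' b when s = a)"
        using Node by (cases "s = a") (auto simp: when_def in_keys_iff sum.delta)
    qed
    also have "\<dots> = Poly_Mapping.lookup p a * Poly_Mapping.lookup p' b"
      by (cases "a \<in> Poly_Mapping.keys p") (auto simp: when_def in_keys_iff)
    finally show ?thesis using Node by simp
  qed
  finally show ?thesis .
qed

lemma lookup_fm_br_Leaf [simp]: "Poly_Mapping.lookup (fm_br p p') (Leaf x) = 0"
  by (simp add: lookup_fm_br)

lemma lookup_fm_br_Node [simp]: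
  "Poly_Mapping.lookup (fm_br p p') (Node s t) = Poly_Mapping.lookup p s * Poly_Mapping.lookup p' t"
  by (simp add: lookup_fm_br)

lemma fm_eqI: "(\<And>u. Poly_Mapping.lookup a u = Poly_Mapping.lookup b u) \<Longrightarrow> a = b"
  by (rule poly_mapping_eqI)

lemma fm_br_eqI:
  assumes "\<And>x. Poly_Mapping.lookup a (Leaf x) = 0" "\<And>x. Poly_Mapping.lookup b (Leaf x) = 0"
    and "\<And>s t. Poly_Mapping.lookup a (Node s t) = Poly_Mapping.lookup b (Node s t)"
  shows "a = b"
proof (rule fm_eqI)
  fix u show "Poly_Mapping.lookup a u = Poly_Mapping.lookup b u"
    using assms by (cases u) auto
qed

lemma fm_br_add_left [simp]: "fm_br (a + b) c = fm_br a c + fm_br b c"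
  by (rule fm_br_eqI) (auto simp: lookup_add algebra_simps)
lemma fm_br_add_right [simp]: "fm_br c (a + b) = fm_br c a + fm_br c b"
  by (rule fm_br_eqI) (auto simp: lookup_add algebra_simps)
lemma fm_br_smult_left [simp]: "fm_br (fm_smult k a) c = fm_smult k (fm_br a c)"
  by (rule fm_br_eqI) (auto simp: algebra_simps)
lemma fm_br_smult_right [simp]: "fm_br a (fm_smult k c) = fm_smult k (fm_br a c)"
  by (rule fm_br_eqI) (auto simp: algebra_simps)
lemma fm_br_zero_left [simp]: "fm_br 0 c = 0"
  by (rule fm_br_eqI) auto
lemma fm_br_zero_right [simp]: "fm_br c 0 = 0"
  by (rule fm_br_eqI) auto
lemma fm_br_neg_left [simp]: "fm_br (- a) c = - fm_br a c"
  by (rule fm_br_eqI) (auto simp: lookup_minus)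
lemma fm_br_neg_right [simp]: "fm_br c (- a) = - fm_br c a"
  by (rule fm_br_eqI) (auto simp: lookup_minus)
lemma fm_br_diff_left [simp]: "fm_br (a - b) c = fm_br a c - fm_br b c"
  by (rule fm_br_eqI) (auto simp: lookup_minus algebra_simps)
lemma fm_br_diff_right [simp]: "fm_br c (a - b) = fm_br c a - fm_br c b"
  by (rule fm_br_eqI) (auto simp: lookup_minus algebra_simps)

lemma fm_smult_add [simp]: "fm_smult k (a + b) = fm_smult k a + fm_smult k b"
  by (rule fm_eqI) (auto simp: lookup_add algebra_simps)
lemma fm_smult_diff [simp]: "fm_smult k (a - b) = fm_smult k a - fm_smult k b"
  by (rule fm_eqI) (auto simp: lookup_minus algebra_simps)
lemma fm_smult_neg [simp]: "fm_smult k (- a) = - fm_smult k a"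
  by (rule fm_eqI) (auto simp: lookup_minus algebra_simps)
lemma fm_smult_zero [simp]: "fm_smult k 0 = 0"
  by (rule fm_eqI) auto
lemma fm_smult_zero_left [simp]: "fm_smult 0 a = 0"
  by (rule fm_eqI) auto
lemma fm_smult_one [simp]: "fm_smult 1 a = a"
  by (rule fm_eqI) auto
lemma fm_smult_minus_one: "fm_smult (-1) a = - a"
  by (rule fm_eqI) (auto simp: lookup_minus)
lemma fm_smult_smult [simp]: "fm_smult k (fm_smult l a) = fm_smult (k * l) a"
  by (rule fm_eqI) (auto simp: algebra_simps)
lemma fm_smult_add_scalar: "fm_smult (k + l) a = fm_smult k a + fm_smult l a"
  by (rule fm_eqI) (auto simp: lookup_add algebra_simps)
lemma fm_smult_diff_scalar: "fm_smult (k - l) a = fm_smult k a - fm_smult l a"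
  by (rule fm_eqI) (auto simp: lookup_minus algebra_simps)
lemma fm_smult_sum: "fm_smult k (sum f A) = sum (\<lambda>i. fm_smult k (f i)) A"
  by (induction A rule: infinite_finite_induct) auto
lemma fm_br_sum_left: "fm_br (sum f A) c = sum (\<lambda>i. fm_br (f i) c) A"
  by (induction A rule: infinite_finite_induct) auto
lemma fm_br_sum_right: "fm_br c (sum f A) = sum (\<lambda>i. fm_br c (f i)) A"
  by (induction A rule: infinite_finite_induct) auto

lemma fm_br_tree [simp]: "fm_br (tree s) (tree t) = (tree (Node s t) :: ('x, 'r::comm_ring_1) fm)"
  by (rule fm_br_eqI) (auto simp: lookup_single when_def)

lemma keys_fm_smult: "Poly_Mapping.keys (fm_smult c p) \<subseteq> Poly_Mapping.keys p"
  by (auto simp: in_keys_iff)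

lemma keys_fm_br: "Poly_Mapping.keys (fm_br a b) \<subseteq> (\<lambda>(s,t). Node s t) ` (Poly_Mapping.keys a \<times> Poly_Mapping.keys b)"
proof
  fix u assume u: "u \<in> Poly_Mapping.keys (fm_br a b)"
  then show "u \<in> (\<lambda>(s,t). Node s t) ` (Poly_Mapping.keys a \<times> Poly_Mapping.keys b)"
  proof (cases u)
    case (Leaf x) then show ?thesis using u by (simp add: in_keys_iff)
  next
    case (Node s t)
    then have "s \<in> Poly_Mapping.keys a" "t \<in> Poly_Mapping.keys b" using u by (auto simp: in_keys_iff)
    then show ?thesis using Node by force
  qed
qed

lemma fm_gen_tree: "fm_gen x = tree (Leaf x)"
  by (simp add: fm_gen_def)

lemma single_smult: "Poly_Mapping.single t c = fm_smult c (tree t)"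
  by (rule fm_eqI) (auto simp: lookup_single when_def)

lemma fm_expand: "p = (\<Sum>t\<in>Poly_Mapping.keys p. fm_smult (Poly_Mapping.lookup p t) (tree t))"
proof (rule fm_eqI)
  fix u
  show "Poly_Mapping.lookup p u = Poly_Mapping.lookup (\<Sum>t\<in>Poly_Mapping.keys p. fm_smult (Poly_Mapping.lookup p t) (tree t)) u"
    by (cases "u \<in> Poly_Mapping.keys p") (auto simp: lookup_sum lookup_single when_def in_keys_iff if_distrib[of "(*) _"] sum.delta' cong: if_cong)
qed

definition AG :: "('a, 'r::comm_ring_1, 'm) lie_scheme \<Rightarrow> 'a ring" where
  "AG L = \<lparr>carrier = lcarrier L, mult = lbr L, one = lzero L, zero = lzero L, add = ladd L\<rparr>"

lemma AG_simps [simp]: "carrier (AG L) = lcarrier L" "add (AG L) = ladd L" "zero (AG L) = lzero L"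
  by (simp_all add: AG_def)

locale nalg =
  fixes L :: "('a, 'r::comm_ring_1, 'm) lie_scheme"
  assumes zero_cl [simp]: "lzero L \<in> lcarrier L"
  and add_cl [simp]: "\<lbrakk>x \<in> lcarrier L; y \<in> lcarrier L\<rbrakk> \<Longrightarrow> ladd L x y \<in> lcarrier L"
  and br_cl [simp]: "\<lbrakk>x \<in> lcarrier L; y \<in> lcarrier L\<rbrakk> \<Longrightarrow> lbr L x y \<in> lcarrier L"
  and neg_cl [simp]: "x \<in> lcarrier L \<Longrightarrow> lneg L x \<in> lcarrier L"
  and sm_cl [simp]: "x \<in> lcarrier L \<Longrightarrow> lsmult L c x \<in> lcarrier L"
  and add_assoc: "\<lbrakk>x \<in> lcarrier L; y \<in> lcarrier L; z \<in> lcarrier L\<rbrakk> \<Longrightarrow> ladd L (ladd L x y) z = ladd L x (ladd L y z)"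
  and add_comm: "\<lbrakk>x \<in> lcarrier L; y \<in> lcarrier L\<rbrakk> \<Longrightarrow> ladd L x y = ladd L y x"
  and zero_add [simp]: "x \<in> lcarrier L \<Longrightarrow> ladd L (lzero L) x = x"
  and neg_add [simp]: "x \<in> lcarrier L \<Longrightarrow> ladd L (lneg L x) x = lzero L"
  and sm_add: "\<lbrakk>x \<in> lcarrier L; y \<in> lcarrier L\<rbrakk> \<Longrightarrow> lsmult L c (ladd L x y) = ladd L (lsmult L c x) (lsmult L c y)"
  and sm_add_scalar: "x \<in> lcarrier L \<Longrightarrow> lsmult L (c + d) x = ladd L (lsmult L c x) (lsmult L d x)"
  and sm_sm: "x \<in> lcarrier L \<Longrightarrow> lsmult L (c * d) x = lsmult L c (lsmult L d x)"
  and sm_one [simp]: "x \<in> lcarrier L \<Longrightarrow> lsmult L 1 x = x"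
  and br_add_left: "\<lbrakk>x \<in> lcarrier L; y \<in> lcarrier L; z \<in> lcarrier L\<rbrakk> \<Longrightarrow> lbr L (ladd L x y) z = ladd L (lbr L x z) (lbr L y z)"
  and br_add_right: "\<lbrakk>x \<in> lcarrier L; y \<in> lcarrier L; z \<in> lcarrier L\<rbrakk> \<Longrightarrow> lbr L x (ladd L y z) = ladd L (lbr L x y) (lbr L x z)"
  and br_sm_left: "\<lbrakk>x \<in> lcarrier L; y \<in> lcarrier L\<rbrakk> \<Longrightarrow> lbr L (lsmult L c x) y = lsmult L c (lbr L x y)"
  and br_sm_right: "\<lbrakk>x \<in> lcarrier L; y \<in> lcarrier L\<rbrakk> \<Longrightarrow> lbr L x (lsmult L c y) = lsmult L c (lbr L x y)"

lemma lie_algebra_nalg: "lie_algebra L \<Longrightarrow> nalg L"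
  unfolding lie_algebra_def Let_def by (unfold_locales) auto

lemma lie_algebra_alt: "lie_algebra L \<Longrightarrow> x \<in> lcarrier L \<Longrightarrow> lbr L x x = lzero L"
  unfolding lie_algebra_def Let_def by auto

lemma lie_algebra_jacobi: "lie_algebra L \<Longrightarrow> x \<in> lcarrier L \<Longrightarrow> y \<in> lcarrier L \<Longrightarrow> w \<in> lcarrier L \<Longrightarrow>
   ladd L (lbr L x (lbr L y w)) (ladd L (lbr L y (lbr L w x)) (lbr L w (lbr L x y))) = lzero L"
  unfolding lie_algebra_def Let_def by auto

context nalg
begin

lemma add_zero [simp]: "x \<in> lcarrier L \<Longrightarrow> ladd L x (lzero L) = x"
  using add_comm[of x "lzero L"] by simp

lemma add_neg [simp]: "x \<in> lcarrier L \<Longrightarrow> ladd L x (lneg L x) = lzero L"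
  using add_comm[of x "lneg L x"] by simp

lemma add_lcomm: "\<lbrakk>x \<in> lcarrier L; y \<in> lcarrier L; z \<in> lcarrier L\<rbrakk> \<Longrightarrow> ladd L x (ladd L y z) = ladd L y (ladd L x z)"
  by (metis add_assoc add_comm)

lemmas add_ac = add_assoc add_comm add_lcomm

lemma add_left_cancel:
  assumes "x \<in> lcarrier L" "y \<in> lcarrier L" "z \<in> lcarrier L" "ladd L x y = ladd L x z"
  shows "y = z"
proof -
  have "ladd L (lneg L x) (ladd L x y) = ladd L (lneg L x) (ladd L x z)" using assms by simp
  then show ?thesis using assms by (metis add_assoc neg_add neg_cl zero_add)
qed

lemma add_right_cancel:
  assumes "x \<in> lcarrier L" "y \<in> lcarrier L" "z \<in> lcarrier L" "ladd L y x = ladd L z x"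
  shows "y = z"
  using add_left_cancel[of x y z] assms by (simp add: add_comm)

lemma add_eq_self: "\<lbrakk>x \<in> lcarrier L; y \<in> lcarrier L; ladd L x y = x\<rbrakk> \<Longrightarrow> y = lzero L"
  using add_left_cancel[of x y "lzero L"] by simp

lemma neg_unique: "\<lbrakk>x \<in> lcarrier L; y \<in> lcarrier L; ladd L x y = lzero L\<rbrakk> \<Longrightarrow> y = lneg L x"
  using add_left_cancel[of x y "lneg L x"] by simp

lemma sm_zero_left [simp]: "x \<in> lcarrier L \<Longrightarrow> lsmult L 0 x = lzero L"
  using sm_add_scalar[of x 0 0] add_eq_self[of "lsmult L 0 x" "lsmult L 0 x"] by simp

lemma sm_zero_right [simp]: "lsmult L c (lzero L) = lzero L"
  using sm_add[of "lzero L" "lzero L" c] add_eq_self[of "lsmult L c (lzero L)" "lsmult L c (lzero L)"] by simp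

lemma br_zero_left [simp]: "x \<in> lcarrier L \<Longrightarrow> lbr L (lzero L) x = lzero L"
  using br_add_left[of "lzero L" "lzero L" x] add_eq_self[of "lbr L (lzero L) x" "lbr L (lzero L) x"] by simp

lemma br_zero_right [simp]: "x \<in> lcarrier L \<Longrightarrow> lbr L x (lzero L) = lzero L"
  using br_add_right[of x "lzero L" "lzero L"] add_eq_self[of "lbr L x (lzero L)" "lbr L x (lzero L)"] by simp

lemma sm_minus_one: "x \<in> lcarrier L \<Longrightarrow> lsmult L (-1) x = lneg L x"
proof -
  assume x: "x \<in> lcarrier L"
  have "ladd L x (lsmult L (-1) x) = lzero L"
    using sm_add_scalar[of x 1 "-1"] x by simp
  then show ?thesis using neg_unique x by simp
qed

lemma neg_neg [simp]: "x \<in> lcarrier L \<Longrightarrow> lneg L (lneg L x) = x"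
  using neg_unique[of "lneg L x" x] by simp

lemma neg_zero [simp]: "lneg L (lzero L) = lzero L"
  using neg_unique[of "lzero L" "lzero L"] by simp

lemma neg_add_distrib: "\<lbrakk>x \<in> lcarrier L; y \<in> lcarrier L\<rbrakk> \<Longrightarrow> lneg L (ladd L x y) = ladd L (lneg L x) (lneg L y)"
proof -
  assume a: "x \<in> lcarrier L" "y \<in> lcarrier L"
  have "lsmult L (-1) (ladd L x y) = ladd L (lsmult L (-1) x) (lsmult L (-1) y)" using a sm_add by blast
  then show ?thesis using a by (simp add: sm_minus_one)
qed

lemma sm_neg: "x \<in> lcarrier L \<Longrightarrow> lsmult L c (lneg L x) = lneg L (lsmult L c x)"
  by (metis sm_minus_one sm_sm mult.commute sm_cl)

lemma br_neg_left: "\<lbrakk>x \<in> lcarrier L; y \<in> lcarrier L\<rbrakk> \<Longrightarrow> lbr L (lneg L x) y = lneg L (lbr L x y)"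
  by (metis br_sm_left sm_minus_one br_cl)

lemma br_neg_right: "\<lbrakk>x \<in> lcarrier L; y \<in> lcarrier L\<rbrakk> \<Longrightarrow> lbr L x (lneg L y) = lneg L (lbr L x y)"
  by (metis br_sm_right sm_minus_one br_cl)

lemma ag: "abelian_group (AG L)"
proof (rule abelian_groupI)
  fix x assume "x \<in> carrier (AG L)"
  then show "\<exists>y\<in>carrier (AG L). y \<oplus>\<^bsub>AG L\<^esub> x = \<zero>\<^bsub>AG L\<^esub>"
    by (intro bexI[of _ "lneg L x"]) auto
qed (auto simp: add_assoc intro: add_comm)

sublocale A: abelian_group "AG L" by (rule ag)

definition lsum :: "('b \<Rightarrow> 'a) \<Rightarrow> 'b set \<Rightarrow> 'a" where
  "lsum f A = finsum (AG L) f A"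

lemma lsum_empty [simp]: "lsum f {} = lzero L"
  unfolding lsum_def using A.finsum_empty by simp

lemma lsum_insert:
  "\<lbrakk>finite A; a \<notin> A; f a \<in> lcarrier L; \<forall>x\<in>A. f x \<in> lcarrier L\<rbrakk> \<Longrightarrow>
     lsum f (insert a A) = ladd L (f a) (lsum f A)"
  unfolding lsum_def using A.finsum_insert[of A a f] by (auto simp: Pi_def)

lemma lsum_closed [simp]: "(\<And>x. x \<in> A \<Longrightarrow> f x \<in> lcarrier L) \<Longrightarrow> lsum f A \<in> lcarrier L"
  unfolding lsum_def using A.finsum_closed[of f A] by (auto simp: Pi_def)

lemma lsum_infinite: "infinite A \<Longrightarrow> lsum f A = lzero L"
  unfolding lsum_def using A.finsum_infinite by simp

lemma lsum_cong:
  "\<lbrakk>A = B; \<And>x. x \<in> B \<Longrightarrow> f x = g x; \<And>x. x \<in> B \<Longrightarrow> g x \<in> lcarrier L\<rbrakk> \<Longrightarrow> lsum f A = lsum g B"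
  unfolding lsum_def by (rule A.finsum_cong) (auto simp: Pi_def)

lemma lsum_add:
  "\<lbrakk>\<And>x. x \<in> A \<Longrightarrow> f x \<in> lcarrier L; \<And>x. x \<in> A \<Longrightarrow> g x \<in> lcarrier L\<rbrakk> \<Longrightarrow>
    lsum (\<lambda>x. ladd L (f x) (g x)) A = ladd L (lsum f A) (lsum g A)"
  unfolding lsum_def using A.finsum_addf[of f A g] by (auto simp: Pi_def)

lemma lsum_zero: "lsum (\<lambda>x. lzero L) A = lzero L"
  unfolding lsum_def using A.finsum_zero by simp

lemma lsum_neutral: "(\<And>x. x \<in> A \<Longrightarrow> f x = lzero L) \<Longrightarrow> lsum f A = lzero L"
  using lsum_cong[of A A f "\<lambda>x. lzero L"] lsum_zero by simp

lemma lsum_Un_disjoint: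
  "\<lbrakk>finite A; finite B; A \<inter> B = {}; \<And>x. x \<in> A \<union> B \<Longrightarrow> f x \<in> lcarrier L\<rbrakk> \<Longrightarrow>
     lsum f (A \<union> B) = ladd L (lsum f A) (lsum f B)"
  unfolding lsum_def using A.finsum_Un_disjoint[of A B f] by (auto simp: Pi_def)

lemma lsum_superset:
  assumes "finite B" "A \<subseteq> B" "\<And>x. x \<in> B - A \<Longrightarrow> f x = lzero L" "\<And>x. x \<in> B \<Longrightarrow> f x \<in> lcarrier L"
  shows "lsum f B = lsum f A"
proof -
  have "B = A \<union> (B - A)" using assms by auto
  then have "lsum f B = ladd L (lsum f A) (lsum f (B - A))"
    using lsum_Un_disjoint[of A "B - A" f] assms finite_subset[of A B] by auto
  also have "lsum f (B - A) = lzero L" using assms by (intro lsum_neutral) auto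
  moreover have "lsum f A \<in> lcarrier L" using assms by (intro lsum_closed) auto
  ultimately show ?thesis by simp
qed

lemma lsum_reindex:
  "\<lbrakk>inj_on h A; \<And>x. x \<in> h ` A \<Longrightarrow> f x \<in> lcarrier L\<rbrakk> \<Longrightarrow> lsum f (h ` A) = lsum (f \<circ> h) A"
  unfolding lsum_def using A.finsum_reindex[of f h A] by (auto simp: Pi_def comp_def)

lemma lsum_sm:
  assumes "\<And>x. x \<in> A \<Longrightarrow> f x \<in> lcarrier L"
  shows "lsmult L c (lsum f A) = lsum (\<lambda>x. lsmult L c (f x)) A"
  using assms
proof (induction A rule: infinite_finite_induct)
  case (infinite A) then show ?case by (simp add: lsum_infinite)
next
  case empty then show ?case by simp
next
  case (insert a A) then show ?case by (simp add: lsum_insert sm_add)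
qed

lemma lsum_br_left:
  assumes "\<And>x. x \<in> A \<Longrightarrow> f x \<in> lcarrier L" "y \<in> lcarrier L"
  shows "lbr L (lsum f A) y = lsum (\<lambda>x. lbr L (f x) y) A"
  using assms
proof (induction A rule: infinite_finite_induct)
  case (infinite A) then show ?case by (simp add: lsum_infinite)
next
  case empty then show ?case by simp
next
  case (insert a A) then show ?case by (simp add: lsum_insert br_add_left)
qed

lemma lsum_br_right:
  assumes "\<And>x. x \<in> A \<Longrightarrow> f x \<in> lcarrier L" "y \<in> lcarrier L"
  shows "lbr L y (lsum f A) = lsum (\<lambda>x. lbr L y (f x)) A"
  using assms
proof (induction A rule: infinite_finite_induct)
  case (infinite A) then show ?case by (simp add: lsum_infinite)
next
  case empty then show ?case by simp
next
  case (insert a A) then show ?case by (simp add: lsum_insert br_add_right)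
qed

lemma lsum_Sigma:
  assumes "finite A" "finite B" "\<And>a b. a \<in> A \<Longrightarrow> b \<in> B \<Longrightarrow> f (a, b) \<in> lcarrier L"
  shows "lsum f (A \<times> B) = lsum (\<lambda>a. lsum (\<lambda>b. f (a, b)) B) A"
  using assms
proof (induction A rule: finite_induct)
  case empty then show ?case by simp
next
  case (insert a A)
  have eq: "insert a A \<times> B = (Pair a ` B) \<union> (A \<times> B)" by auto
  have "lsum f (insert a A \<times> B) = ladd L (lsum f (Pair a ` B)) (lsum f (A \<times> B))"
    unfolding eq using insert by (intro lsum_Un_disjoint) auto
  also have "lsum f (Pair a ` B) = lsum (\<lambda>b. f (a, b)) B"
    using insert by (subst lsum_reindex) (auto simp: inj_on_def comp_def)
  also have "lsum f (A \<times> B) = lsum (\<lambda>a. lsum (\<lambda>b. f (a, b)) B) A"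
    using insert by auto
  finally show ?case using insert by (simp add: lsum_insert)
qed

definition gext :: "('x mtree \<Rightarrow> 'a) \<Rightarrow> ('x, 'r) fm \<Rightarrow> 'a" where
  "gext T p = lsum (\<lambda>t. lsmult L (Poly_Mapping.lookup p t) (T t)) (Poly_Mapping.keys p)"

lemma gext_closed [simp]: "(\<And>t. T t \<in> lcarrier L) \<Longrightarrow> gext T p \<in> lcarrier L"
  unfolding gext_def by simp

lemma gext_superset:
  assumes "\<And>t. T t \<in> lcarrier L" "finite S" "Poly_Mapping.keys p \<subseteq> S"
  shows "gext T p = lsum (\<lambda>t. lsmult L (Poly_Mapping.lookup p t) (T t)) S"
  unfolding gext_def using assms
  by (intro lsum_superset[symmetric]) (auto simp: in_keys_iff)

lemma gext_add:
  assumes "\<And>t. T t \<in> lcarrier L"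
  shows "gext T (p + p') = ladd L (gext T p) (gext T p')"
proof -
  let ?S = "Poly_Mapping.keys p \<union> Poly_Mapping.keys p'"
  have "gext T (p + p') = lsum (\<lambda>t. lsmult L (Poly_Mapping.lookup (p + p') t) (T t)) ?S"
    using assms keys_add[of p p'] by (intro gext_superset) auto
  also have "\<dots> = lsum (\<lambda>t. ladd L (lsmult L (Poly_Mapping.lookup p t) (T t)) (lsmult L (Poly_Mapping.lookup p' t) (T t))) ?S"
    using assms by (intro lsum_cong) (auto simp: lookup_add sm_add_scalar)
  also have "\<dots> = ladd L (gext T p) (gext T p')"
    using assms by (subst lsum_add) (auto simp: gext_superset[of T ?S])
  finally show ?thesis .
qed

lemma gext_smult:
  assumes "\<And>t. T t \<in> lcarrier L"
  shows "gext T (fm_smult c p) = lsmult L c (gext T p)"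
proof -
  have "gext T (fm_smult c p) = lsum (\<lambda>t. lsmult L (Poly_Mapping.lookup (fm_smult c p) t) (T t)) (Poly_Mapping.keys p)"
    using assms keys_fm_smult by (intro gext_superset) auto
  also have "\<dots> = lsmult L c (gext T p)"
    unfolding gext_def using assms by (subst lsum_sm) (auto simp: sm_sm intro: lsum_cong)
  finally show ?thesis .
qed

lemma gext_zero [simp]: "gext T 0 = lzero L"
  unfolding gext_def by simp

lemma gext_neg:
  assumes "\<And>t. T t \<in> lcarrier L"
  shows "gext T (- p) = lneg L (gext T p)"
  using gext_smult[where T=T, OF assms, of "-1" p] assms by (simp add: fm_smult_minus_one sm_minus_one)

lemma gext_diff:
  assumes "\<And>t. T t \<in> lcarrier L"
  shows "gext T (p - p') = ladd L (gext T p) (lneg L (gext T p'))"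
  using gext_add[where T=T, OF assms, of p "- p'"] gext_neg[where T=T, OF assms, of p'] by simp

lemma gext_single:
  assumes "\<And>t. T t \<in> lcarrier L"
  shows "gext T (Poly_Mapping.single t c) = lsmult L c (T t)"
proof -
  have "gext T (Poly_Mapping.single t c) = lsum (\<lambda>u. lsmult L (Poly_Mapping.lookup (Poly_Mapping.single t c) u) (T u)) {t}"
    using assms by (intro gext_superset) auto
  then show ?thesis using assms by (simp add: lsum_insert)
qed

lemma gext_tree:
  assumes "\<And>t. T t \<in> lcarrier L"
  shows "gext T (tree t) = T t"
  using gext_single[where T=T, OF assms] assms by simp

lemma gext_br:
  assumes "\<And>t. T t \<in> lcarrier L"
  shows "gext T (fm_br a b) = lsum (\<lambda>s. lsum (\<lambda>t. lsmult L (Poly_Mapping.lookup a s * Poly_Mapping.lookup b t) (T (Node s t))) (Poly_Mapping.keys b)) (Poly_Mapping.keys a)"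
proof -
  let ?N = "\<lambda>(s,t). Node s t"
  let ?S = "?N ` (Poly_Mapping.keys a \<times> Poly_Mapping.keys b)"
  have "gext T (fm_br a b) = lsum (\<lambda>u. lsmult L (Poly_Mapping.lookup (fm_br a b) u) (T u)) ?S"
    using assms keys_fm_br[of a b] by (intro gext_superset) auto
  also have "\<dots> = lsum ((\<lambda>u. lsmult L (Poly_Mapping.lookup (fm_br a b) u) (T u)) \<circ> ?N) (Poly_Mapping.keys a \<times> Poly_Mapping.keys b)"
    using assms by (intro lsum_reindex) (auto simp: inj_on_def)
  also have "\<dots> = lsum (\<lambda>s. lsum (\<lambda>t. lsmult L (Poly_Mapping.lookup a s * Poly_Mapping.lookup b t) (T (Node s t))) (Poly_Mapping.keys b)) (Poly_Mapping.keys a)"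
    using assms by (subst lsum_Sigma) (auto simp: comp_def)
  finally show ?thesis .
qed

lemma bilin_sum:
  assumes "\<And>t. X t \<in> lcarrier L" "\<And>t. Y t \<in> lcarrier L"
  shows "lsum (\<lambda>s. lsum (\<lambda>t. lsmult L (Poly_Mapping.lookup a s * Poly_Mapping.lookup b t) (lbr L (X s) (Y t))) (Poly_Mapping.keys b)) (Poly_Mapping.keys a)
       = lbr L (gext X a) (gext Y b)"
proof -
  have "lbr L (gext X a) (gext Y b) = lsum (\<lambda>s. lbr L (lsmult L (Poly_Mapping.lookup a s) (X s)) (gext Y b)) (Poly_Mapping.keys a)"
    unfolding gext_def[of X] using assms by (subst lsum_br_left) auto
  also have "\<dots> = lsum (\<lambda>s. lsum (\<lambda>t. lsmult L (Poly_Mapping.lookup a s * Poly_Mapping.lookup b t) (lbr L (X s) (Y t))) (Poly_Mapping.keys b)) (Poly_Mapping.keys a)"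
  proof (rule lsum_cong[OF refl])
    fix s
    show "lbr L (lsmult L (Poly_Mapping.lookup a s) (X s)) (gext Y b) =
          lsum (\<lambda>t. lsmult L (Poly_Mapping.lookup a s * Poly_Mapping.lookup b t) (lbr L (X s) (Y t))) (Poly_Mapping.keys b)"
      unfolding gext_def[of Y] using assms
      by (subst lsum_br_right) (auto intro!: lsum_cong simp: br_sm_left br_sm_right sm_sm[symmetric] mult.commute)
  qed (use assms in auto)
  finally show ?thesis by simp
qed

end

context nalg
begin

lemma gext_hom:
  assumes "\<And>t. T t \<in> lcarrier L" "\<And>s t. T (Node s t) = lbr L (T s) (T t)"
  shows "gext T (fm_br a b) = lbr L (gext T a) (gext T b)"
  using assms by (simp add: gext_br bilin_sum)

lemma gext_der:
  assumes "\<And>t. T t \<in> lcarrier L" "\<And>t. U t \<in> lcarrier L"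
    "\<And>s t. T (Node s t) = ladd L (lbr L (T s) (U t)) (lbr L (U s) (T t))"
  shows "gext T (fm_br a b) = ladd L (lbr L (gext T a) (gext U b)) (lbr L (gext U a) (gext T b))"
proof -
  have "gext T (fm_br a b) = lsum (\<lambda>s. ladd L
          (lsum (\<lambda>t. lsmult L (Poly_Mapping.lookup a s * Poly_Mapping.lookup b t) (lbr L (T s) (U t))) (Poly_Mapping.keys b))
          (lsum (\<lambda>t. lsmult L (Poly_Mapping.lookup a s * Poly_Mapping.lookup b t) (lbr L (U s) (T t))) (Poly_Mapping.keys b)))
        (Poly_Mapping.keys a)"
    unfolding gext_br[OF assms(1)] using assms
    by (intro lsum_cong) (auto simp: sm_add lsum_add[symmetric] intro!: lsum_cong)
  also have "\<dots> = ladd L (lbr L (gext T a) (gext U b)) (lbr L (gext U a) (gext T b))"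
    using assms by (simp add: lsum_add bilin_sum)
  finally show ?thesis .
qed

end

definition fmL :: "(('x, 'r::comm_ring_1) fm, 'r) lie" where
  "fmL = \<lparr>lcarrier = UNIV, ladd = (+), lzero = 0, lneg = uminus, lsmult = fm_smult, lbr = fm_br\<rparr>"

lemma fmL_simps [simp]: "lcarrier fmL = UNIV" "ladd fmL = (+)" "lzero fmL = 0" "lneg fmL = uminus"
  "lsmult fmL = fm_smult" "lbr fmL = fm_br"
  by (simp_all add: fmL_def)

interpretation F: nalg "fmL :: (('x, 'r::comm_ring_1) fm, 'r) lie"
  by unfold_locales (auto simp: add.assoc add.commute fm_smult_add_scalar)

lemma F_lsum: "F.lsum f A = sum f A"
  by (induction A rule: infinite_finite_induct) (auto simp: F.lsum_infinite F.lsum_insert)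

lemma F_gext_tree: "F.gext tree p = p"
  unfolding F.gext_def F_lsum fmL_simps by (rule fm_expand[symmetric])

fun htree :: "('a, 'r::comm_ring_1, 'm) lie_scheme \<Rightarrow> ('x \<Rightarrow> 'a) \<Rightarrow> 'x mtree \<Rightarrow> 'a" where
  "htree L f (Leaf x) = f x"
| "htree L f (Node s t) = lbr L (htree L f s) (htree L f t)"

lemma (in nalg) htree_cl: "(\<And>x. f x \<in> lcarrier L) \<Longrightarrow> htree L f t \<in> lcarrier L"
  by (induction t) auto

subsection \<open>Derivation extension on the free algebra\<close>

fun dtree :: "('x \<Rightarrow> ('x, 'r::comm_ring_1) fm) \<Rightarrow> 'x mtree \<Rightarrow> ('x, 'r) fm" where
  "dtree d (Leaf x) = d x"
| "dtree d (Node s t) = fm_br (dtree d s) (tree t) + fm_br (tree s) (dtree d t)"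

definition Dv :: "('x \<Rightarrow> ('x, 'r::comm_ring_1) fm) \<Rightarrow> ('x, 'r) fm \<Rightarrow> ('x, 'r) fm" where
  "Dv d p = F.gext (dtree d) p"

lemma Dv_add [simp]: "Dv d (a + b) = Dv d a + Dv d b"
  unfolding Dv_def by (simp add: F.gext_add)
lemma Dv_smult [simp]: "Dv d (fm_smult c a) = fm_smult c (Dv d a)"
  unfolding Dv_def by (simp add: F.gext_smult)
lemma Dv_neg [simp]: "Dv d (- a) = - Dv d a"
  unfolding Dv_def by (simp add: F.gext_neg)
lemma Dv_diff [simp]: "Dv d (a - b) = Dv d a - Dv d b"
  unfolding Dv_def by (simp add: F.gext_diff)
lemma Dv_zero [simp]: "Dv d 0 = 0"
  unfolding Dv_def by simp
lemma Dv_gen [simp]: "Dv d (fm_gen x) = d x"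
  unfolding Dv_def fm_gen_tree by (simp add: F.gext_tree)
lemma Dv_br [simp]: "Dv d (fm_br a b) = fm_br (Dv d a) b + fm_br a (Dv d b)"
proof -
  have "F.gext (dtree d) (fm_br a b) = fm_br (F.gext (dtree d) a) (F.gext tree b) + fm_br (F.gext tree a) (F.gext (dtree d) b)"
    by (rule F.gext_der[simplified]) simp
  then show ?thesis unfolding Dv_def F_gext_tree .
qed

abbreviation FI :: "('x, 'r::comm_ring_1) fm set \<Rightarrow> ('x, 'r) fm set" where
  "FI R \<equiv> fm_ideal (lie_rels \<union> R)"

abbreviation cls :: "('x, 'r::comm_ring_1) fm set \<Rightarrow> ('x, 'r) fm \<Rightarrow> ('x, 'r) fm set" where
  "cls R \<equiv> fm_class (FI R)"

lemma I_neg: "a \<in> FI R \<Longrightarrow> - a \<in> FI R"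
  using fm_ideal.smult[of a "lie_rels \<union> R" "-1"] by (simp add: fm_smult_minus_one)

lemma I_diff: "a \<in> FI R \<Longrightarrow> b \<in> FI R \<Longrightarrow> a - b \<in> FI R"
  using fm_ideal.add[OF _ I_neg] by (metis diff_conv_add_uminus)

lemma I_add: "a \<in> FI R \<Longrightarrow> b \<in> FI R \<Longrightarrow> a + b \<in> FI R"
  by (rule fm_ideal.add)

lemma I_smult: "a \<in> FI R \<Longrightarrow> fm_smult c a \<in> FI R"
  by (rule fm_ideal.smult)

lemma I_brl: "a \<in> FI R \<Longrightarrow> fm_br x a \<in> FI R"
  by (rule fm_ideal.brl)

lemma I_brr: "a \<in> FI R \<Longrightarrow> fm_br a x \<in> FI R"
  by (rule fm_ideal.brr)

lemma I_zero: "0 \<in> FI R"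
  by (rule fm_ideal.zero)

lemma I_R: "r \<in> R \<Longrightarrow> r \<in> FI R"
  by (rule fm_ideal.base) simp

lemma I_self_br: "fm_br a a \<in> FI R"
  by (rule fm_ideal.base) (auto simp: lie_rels_def)

lemma I_jac: "fm_br a (fm_br b c) + fm_br b (fm_br c a) + fm_br c (fm_br a b) \<in> FI R"
  by (rule fm_ideal.base) (auto simp: lie_rels_def)

lemma I_anti: "fm_br a b + fm_br b a \<in> FI R"
proof -
  have "fm_br (a + b) (a + b) - fm_br a a - fm_br b b \<in> FI R"
    by (intro I_diff I_self_br)
  then show ?thesis by (simp add: algebra_simps)
qed

lemma cls_eq: "cls R a = cls R b \<longleftrightarrow> a - b \<in> FI R"
proof
  assume eq: "cls R a = cls R b"
  have "b \<in> cls R b" by (simp add: fm_class_def I_zero)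
  then have "b \<in> cls R a" using eq by simp
  then show "a - b \<in> FI R" by (simp add: fm_class_def)
next
  assume h: "a - b \<in> FI R"
  have "a - y \<in> FI R \<longleftrightarrow> b - y \<in> FI R" for y
  proof
    assume "a - y \<in> FI R"
    moreover have "b - y = (a - y) - (a - b)" by simp
    ultimately show "b - y \<in> FI R" using I_diff h by metis
  next
    assume "b - y \<in> FI R"
    moreover have "a - y = (a - b) + (b - y)" by simp
    ultimately show "a - y \<in> FI R" using I_add h by metis
  qed
  then show "cls R a = cls R b" by (simp add: fm_class_def)
qed

lemma rep_cls: "a - fm_rep (cls R a) \<in> FI R"
proof -
  have "a \<in> cls R a" by (simp add: fm_class_def I_zero)
  then have "fm_rep (cls R a) \<in> cls R a" unfolding fm_rep_def by (rule someI)
  then show ?thesis by (simp add: fm_class_def)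
qed

lemma cls_rep [simp]: "cls R (fm_rep (cls R a)) = cls R a"
  using rep_cls[of a R] cls_eq[of R a "fm_rep (cls R a)"] by simp

lemma cls_eqI: "a - b \<in> FI R \<Longrightarrow> cls R a = cls R b"
  by (simp add: cls_eq)

abbreviation PL :: "('x, 'r::comm_ring_1) fm set \<Rightarrow> (('x, 'r) fm set, 'r) lie" where
  "PL R \<equiv> presented_lie R"

lemma PL_carrier: "lcarrier (PL R) = range (cls R)"
  by (simp add: presented_lie_def Let_def)

lemma PL_in [simp]: "cls R a \<in> lcarrier (PL R)"
  by (simp add: PL_carrier)

lemma PL_add [simp]: "ladd (PL R) (cls R a) (cls R b) = cls R (a + b)"
proof -
  have "fm_rep (cls R a) + fm_rep (cls R b) - (a + b) \<in> FI R"
  proof -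
    have eq: "fm_rep (cls R a) + fm_rep (cls R b) - (a + b) = - ((a - fm_rep (cls R a)) + (b - fm_rep (cls R b)))"
      by (simp add: algebra_simps)
    show ?thesis unfolding eq by (intro I_neg I_add rep_cls)
  qed
  then show ?thesis by (simp add: presented_lie_def Let_def cls_eq)
qed

lemma PL_zero [simp]: "lzero (PL R) = cls R 0"
  by (simp add: presented_lie_def Let_def)

lemma PL_neg [simp]: "lneg (PL R) (cls R a) = cls R (- a)"
proof -
  have "- fm_rep (cls R a) - (- a) \<in> FI R"
    using rep_cls[of a R] by simp
  then show ?thesis by (simp add: presented_lie_def Let_def cls_eq)
qed

lemma PL_smult [simp]: "lsmult (PL R) c (cls R a) = cls R (fm_smult c a)"
proof -
  have "fm_smult c (fm_rep (cls R a)) - fm_smult c a \<in> FI R"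
    using I_neg[OF I_smult[OF rep_cls[of a R], of c]] by simp
  then show ?thesis by (simp add: presented_lie_def Let_def cls_eq)
qed

lemma PL_br [simp]: "lbr (PL R) (cls R a) (cls R b) = cls R (fm_br a b)"
proof -
  have "fm_br (fm_rep (cls R a)) (fm_rep (cls R b)) - fm_br a b =
        - (fm_br (a - fm_rep (cls R a)) (fm_rep (cls R b)) + fm_br a (b - fm_rep (cls R b)))"
    by (simp add: algebra_simps)
  moreover have "\<dots> \<in> FI R"
    by (intro I_neg I_add I_brr I_brl rep_cls)
  ultimately show ?thesis by (simp add: presented_lie_def Let_def cls_eq)
qed

lemma PL_cases: "A \<in> lcarrier (PL R) \<Longrightarrow> (\<And>a. A = cls R a \<Longrightarrow> P) \<Longrightarrow> P"
  by (auto simp: PL_carrier)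

lemma PL_lie: "lie_algebra (PL R)"
proof -
  have jac: "\<And>a b c. fm_br a (fm_br b c) + (fm_br b (fm_br c a) + fm_br c (fm_br a b)) \<in> FI R"
    using I_jac by (simp add: add.assoc)
  have fr: "\<And>P f. (\<forall>x\<in>range f. P x) = (\<forall>a. P (f a))" by auto
  show ?thesis
    unfolding lie_algebra_def Let_def PL_carrier fr
    by (simp add: PL_carrier[symmetric] cls_eq algebra_simps fm_smult_add_scalar I_self_br I_zero)
      (use jac in blast)
qed

lemma (in nalg) sub_eq_zero:
  "\<lbrakk>x \<in> lcarrier L; y \<in> lcarrier L; ladd L x (lneg L y) = lzero L\<rbrakk> \<Longrightarrow> x = y"
proof -
  assume a: "x \<in> lcarrier L" "y \<in> lcarrier L" "ladd L x (lneg L y) = lzero L"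
  then have "lneg L y = lneg L x" using neg_unique[of x "lneg L y"] by simp
  then have "lneg L (lneg L y) = lneg L (lneg L x)" by simp
  then show "x = y" using a by simp
qed

lemma hom_ext:
  assumes L: "lie_algebra L" and f: "\<And>x. f x \<in> lcarrier L"
    and R0: "\<And>r. r \<in> R \<Longrightarrow> nalg.gext L (htree L f) r = lzero L"
  shows "lie_hom (PL R) L (\<lambda>A. nalg.gext L (htree L f) (fm_rep A))"
    and "nalg.gext L (htree L f) (fm_rep (cls R p)) = nalg.gext L (htree L f) p"
proof -
  interpret nalg L by (rule lie_algebra_nalg[OF L])
  let ?F = "gext (htree L f)"
  have T: "\<And>t. htree L f t \<in> lcarrier L" using f by (rule htree_cl)
  have Fbr: "\<And>a b. ?F (fm_br a b) = lbr L (?F a) (?F b)"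
    using T by (rule gext_hom) simp
  have Fadd: "\<And>a b. ?F (a + b) = ladd L (?F a) (?F b)" using T by (rule gext_add)
  have Fsm: "\<And>c a. ?F (fm_smult c a) = lsmult L c (?F a)" using T by (rule gext_smult)
  have Fdiff: "\<And>a b. ?F (a - b) = ladd L (?F a) (lneg L (?F b))" using T by (rule gext_diff)
  have Fcl: "\<And>a. ?F a \<in> lcarrier L" using T by simp
  have ideal: "?F a = lzero L" if "a \<in> FI R" for a
    using that
  proof (induction a rule: fm_ideal.induct)
    case (base r)
    then consider "r \<in> R" | a where "r = fm_br a a"
      | a b c where "r = fm_br a (fm_br b c) + fm_br b (fm_br c a) + fm_br c (fm_br a b)"
      unfolding lie_rels_def by blast
    then show ?case
    proof cases
      case 1 then show ?thesis by (rule R0)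
    next
      case (2 a) then show ?thesis using lie_algebra_alt[OF L] by (simp add: Fbr Fcl)
    next
      case (3 a b c) then show ?thesis using lie_algebra_jacobi[OF L] by (simp add: Fbr Fadd Fcl add_assoc)
    qed
  next
    case zero then show ?case by simp
  next
    case (add a b) then show ?case by (simp add: Fadd)
  next
    case (smult a c) then show ?case by (simp add: Fsm)
  next
    case (brl a x) then show ?case by (simp add: Fbr Fcl)
  next
    case (brr a x) then show ?case by (simp add: Fbr Fcl)
  qed
  have Fcls: "?F (fm_rep (cls R p)) = ?F p" for p
  proof -
    have "ladd L (?F p) (lneg L (?F (fm_rep (cls R p)))) = lzero L"
      using ideal[OF rep_cls[of p R]] by (simp add: Fdiff)
    then show ?thesis using Fcl sub_eq_zero by metis
  qed
  then show "?F (fm_rep (cls R p)) = ?F p" .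
  show "lie_hom (PL R) L (\<lambda>A. ?F (fm_rep A))"
    unfolding lie_hom_def
    by (auto simp: PL_carrier Fcls Fcl Fadd Fsm Fbr)
qed

lemma der_ideal:
  assumes D0: "\<And>r. r \<in> R \<Longrightarrow> Dv d r \<in> FI R"
  shows "a \<in> FI R \<Longrightarrow> Dv d a \<in> FI R"
proof (induction a rule: fm_ideal.induct)
  case (base r)
  then consider "r \<in> R" | a where "r = fm_br a a"
    | a b c where "r = fm_br a (fm_br b c) + fm_br b (fm_br c a) + fm_br c (fm_br a b)"
    unfolding lie_rels_def by blast
  then show ?case
  proof cases
    case 1 then show ?thesis by (rule D0)
  next
    case (2 a) then show ?thesis by (simp add: I_anti)
  next
    case (3 a b c)
    let ?J = "\<lambda>a b c. fm_br a (fm_br b c) + fm_br b (fm_br c a) + fm_br c (fm_br a b)"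
    have "Dv d r = ?J (Dv d a) b c + ?J a (Dv d b) c + ?J a b (Dv d c)"
      using 3 by (simp add: algebra_simps)
    then show ?thesis by (simp add: I_add I_jac)
  qed
next
  case zero then show ?case by (simp add: I_zero)
next
  case (add a b) then show ?case by (simp add: I_add)
next
  case (smult a c) then show ?case by (simp add: I_smult)
next
  case (brl a x) then show ?case by (simp add: I_add I_brl I_brr)
next
  case (brr a x) then show ?case by (simp add: I_add I_brl I_brr)
qed

lemma der_cls:
  assumes D0: "\<And>r. r \<in> R \<Longrightarrow> Dv d r \<in> FI R"
  shows "cls R (Dv d (fm_rep (cls R p))) = cls R (Dv d p)"
proof -
  have "Dv d (p - fm_rep (cls R p)) \<in> FI R" by (rule der_ideal[OF D0 rep_cls])
  then have "Dv d p - Dv d (fm_rep (cls R p)) \<in> FI R" by simp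
  then show ?thesis by (intro cls_eqI) (metis I_neg minus_diff_eq)
qed

subsection \<open>Spanning by generators\<close>

inductive_set fspan :: "('x, 'r::comm_ring_1) fm set" where
  sp0: "0 \<in> fspan"
| spg: "fm_gen x \<in> fspan"
| spa: "a \<in> fspan \<Longrightarrow> b \<in> fspan \<Longrightarrow> a + b \<in> fspan"
| sps: "a \<in> fspan \<Longrightarrow> fm_smult c a \<in> fspan"

definition span_hyp :: "('x, 'r::comm_ring_1) fm set \<Rightarrow> bool" where
  "span_hyp R \<longleftrightarrow> (\<forall>x y. \<exists>s\<in>fspan. fm_br (fm_gen x) (fm_gen y) - s \<in> FI R)"

lemma span_br_gen:
  assumes H: "span_hyp R" and b: "b \<in> fspan"
  shows "\<exists>s\<in>fspan. fm_br (fm_gen x) b - s \<in> FI R"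
  using b
proof (induction b rule: fspan.induct)
  case sp0 then show ?case by (intro bexI[of _ 0]) (auto intro: fspan.intros I_zero)
next
  case (spg y) then show ?case using H by (auto simp: span_hyp_def)
next
  case (spa a b)
  then obtain s1 s2 where "s1 \<in> fspan" "s2 \<in> fspan" "fm_br (fm_gen x) a - s1 \<in> FI R" "fm_br (fm_gen x) b - s2 \<in> FI R"
    by blast
  then show ?case
    by (intro bexI[of _ "s1 + s2"]) (auto intro: fspan.intros dest: I_add simp: algebra_simps)
next
  case (sps a c)
  then obtain s1 where "s1 \<in> fspan" "fm_br (fm_gen x) a - s1 \<in> FI R" by blast
  then show ?case
    by (intro bexI[of _ "fm_smult c s1"]) (auto intro: fspan.intros dest: I_smult[where c=c])
qed

lemma span_br:
  assumes H: "span_hyp R" and a: "a \<in> fspan" and b: "b \<in> fspan"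
  shows "\<exists>s\<in>fspan. fm_br a b - s \<in> FI R"
  using a
proof (induction a rule: fspan.induct)
  case sp0 then show ?case by (intro bexI[of _ 0]) (auto intro: fspan.intros I_zero)
next
  case (spg y) then show ?case using span_br_gen[OF H b] by blast
next
  case (spa a1 a2)
  then obtain s1 s2 where "s1 \<in> fspan" "s2 \<in> fspan" "fm_br a1 b - s1 \<in> FI R" "fm_br a2 b - s2 \<in> FI R"
    by blast
  then show ?case
    by (intro bexI[of _ "s1 + s2"]) (auto intro: fspan.intros dest: I_add simp: algebra_simps)
next
  case (sps a c)
  then obtain s1 where "s1 \<in> fspan" "fm_br a b - s1 \<in> FI R" by blast
  then show ?case
    by (intro bexI[of _ "fm_smult c s1"]) (auto intro: fspan.intros dest: I_smult[where c=c])
qed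

lemma span_tree:
  assumes H: "span_hyp R"
  shows "\<exists>s\<in>fspan. tree t - s \<in> FI R"
proof (induction t)
  case (Leaf x) then show ?case
    using fspan.spg[of x] by (intro bexI[of _ "fm_gen x"]) (auto simp: fm_gen_tree I_zero)
next
  case (Node t1 t2)
  then obtain a b where ab: "a \<in> fspan" "b \<in> fspan" "tree t1 - a \<in> FI R" "tree t2 - b \<in> FI R" by blast
  obtain s where s: "s \<in> fspan" "fm_br a b - s \<in> FI R" using span_br[OF H ab(1,2)] by blast
  have tn: "tree (Node t1 t2) = fm_br (tree t1) (tree t2)" by simp
  have "tree (Node t1 t2) - s = fm_br (tree t1 - a) (tree t2) + fm_br a (tree t2 - b) + (fm_br a b - s)"
    unfolding tn by (simp del: fm_br_tree add: algebra_simps)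
  also have "\<dots> \<in> FI R" using ab s by (intro I_add I_brl I_brr)
  finally show ?case using s by blast
qed

lemma span_sum:
  assumes H: "span_hyp R"
  shows "finite A \<Longrightarrow> \<exists>s\<in>fspan. (\<Sum>t\<in>A. fm_smult (c t) (tree t)) - s \<in> FI R"
proof (induction A rule: finite_induct)
  case empty then show ?case by (intro bexI[of _ 0]) (auto intro: fspan.intros I_zero)
next
  case (insert a A)
  then obtain s1 where s1: "s1 \<in> fspan" "(\<Sum>t\<in>A. fm_smult (c t) (tree t)) - s1 \<in> FI R" by blast
  obtain s2 where s2: "s2 \<in> fspan" "tree a - s2 \<in> FI R" using span_tree[OF H] by blast
  have "(\<Sum>t\<in>insert a A. fm_smult (c t) (tree t)) - (fm_smult (c a) s2 + s1) =
        fm_smult (c a) (tree a - s2) + ((\<Sum>t\<in>A. fm_smult (c t) (tree t)) - s1)"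
    using insert by (simp add: algebra_simps)
  also have "\<dots> \<in> FI R" using s1 s2 by (intro I_add I_smult)
  finally show ?case using s1 s2 by (blast intro: fspan.intros)
qed

lemma span_all:
  assumes H: "span_hyp R"
  shows "\<exists>s\<in>fspan. p - s \<in> FI R"
  using span_sum[OF H, of "Poly_Mapping.keys p" "Poly_Mapping.lookup p"] fm_expand[of p] by simp

lemma PL_induct:
  assumes H: "span_hyp R"
    and P0: "P (cls R 0)"
    and Padd: "\<And>a b. P (cls R a) \<Longrightarrow> P (cls R b) \<Longrightarrow> P (cls R (a + b))"
    and Psm: "\<And>c a. P (cls R a) \<Longrightarrow> P (cls R (fm_smult c a))"
    and Pgen: "\<And>x. P (cls R (fm_gen x))"
  shows "P (cls R p)"
proof -
  obtain s where s: "s \<in> fspan" "p - s \<in> FI R" using span_all[OF H] by blast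
  have "P (cls R s)" using s(1) by (induction s rule: fspan.induct) (auto intro: assms)
  then show ?thesis using cls_eqI[OF s(2)] by simp
qed

locale lie = nalg +
  assumes alt: "x \<in> lcarrier L \<Longrightarrow> lbr L x x = lzero L"
  and jac: "\<lbrakk>x \<in> lcarrier L; y \<in> lcarrier L; w \<in> lcarrier L\<rbrakk> \<Longrightarrow>
   ladd L (lbr L x (lbr L y w)) (ladd L (lbr L y (lbr L w x)) (lbr L w (lbr L x y))) = lzero L"

lemma lie_algebra_lie: "lie_algebra L \<Longrightarrow> lie L"
  by (intro lie.intro lie_axioms.intro lie_algebra_nalg lie_algebra_alt lie_algebra_jacobi) auto

context lie
begin

lemma anti: "\<lbrakk>x \<in> lcarrier L; y \<in> lcarrier L\<rbrakk> \<Longrightarrow> lbr L y x = lneg L (lbr L x y)"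
proof -
  assume a: "x \<in> lcarrier L" "y \<in> lcarrier L"
  have "lzero L = lbr L (ladd L x y) (ladd L x y)" using a alt by simp
  also have "\<dots> = ladd L (ladd L (lbr L x x) (lbr L y x)) (ladd L (lbr L x y) (lbr L y y))"
    using a by (simp add: br_add_left br_add_right)
  also have "\<dots> = ladd L (lbr L x y) (lbr L y x)"
    using a by (simp add: alt add_comm)
  finally show ?thesis using a neg_unique by simp
qed

lemma eq_neg: "\<lbrakk>x \<in> lcarrier L; y \<in> lcarrier L; ladd L x y = lzero L\<rbrakk> \<Longrightarrow> x = lneg L y"
  using neg_unique[of y x] by (simp add: add_comm)

lemma J3: "\<lbrakk>x \<in> lcarrier L; y \<in> lcarrier L; z \<in> lcarrier L\<rbrakk> \<Longrightarrow>
  lbr L x (lbr L y z) = ladd L (lbr L (lbr L x y) z) (lbr L y (lbr L x z))"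
proof -
  assume a: "x \<in> lcarrier L" "y \<in> lcarrier L" "z \<in> lcarrier L"
  have "lbr L x (lbr L y z) = lneg L (ladd L (lbr L y (lbr L z x)) (lbr L z (lbr L x y)))"
    using jac[OF a] a by (intro eq_neg) auto
  also have "\<dots> = ladd L (lneg L (lbr L y (lbr L z x))) (lneg L (lbr L z (lbr L x y)))"
    using a by (simp add: neg_add_distrib)
  also have "lneg L (lbr L y (lbr L z x)) = lbr L y (lbr L x z)"
    using a by (simp add: anti[of x z] br_neg_right)
  also have "lneg L (lbr L z (lbr L x y)) = lbr L (lbr L x y) z"
    using a by (simp add: anti[of "lbr L x y" z])
  finally show ?thesis using a by (simp add: add_comm)
qed

lemma J1: "\<lbrakk>x \<in> lcarrier L; y \<in> lcarrier L; z \<in> lcarrier L\<rbrakk> \<Longrightarrow>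
  lbr L (lbr L x y) z = ladd L (lbr L x (lbr L y z)) (lneg L (lbr L y (lbr L x z)))"
  using J3[of x y z] by (simp add: add_assoc)

end

locale qsetup =
  fixes G :: "('a, 'r::comm_ring_1) lie" and H :: "'a set" and q :: int and E :: "('a qgen, 'r) fm set"
  assumes LG: "lie_algebra G" and IH: "lie_ideal G H"
  and Ecases: "E = {} \<or> E = {fm_gen (QT h h) | h. h \<in> H}"
begin

sublocale g: lie G by (rule lie_algebra_lie[OF LG])

abbreviation "C \<equiv> lcarrier G"
abbreviation "RR \<equiv> qtensor_rels G H q \<union> E"
abbreviation I where "I \<equiv> FI RR"
abbreviation tg :: "'a \<Rightarrow> 'a \<Rightarrow> ('a qgen, 'r) fm" where "tg h g \<equiv> fm_gen (QT h g)"
abbreviation cu :: "'a \<Rightarrow> ('a qgen, 'r) fm" where "cu h \<equiv> fm_gen (QC h)"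
abbreviation "sg \<equiv> (of_int q :: 'r)"
abbreviation "br \<equiv> lbr G"
abbreviation "ad \<equiv> ladd G"
abbreviation "sm \<equiv> lsmult G"
abbreviation "ng \<equiv> lneg G"

lemma H_sub: "h \<in> H \<Longrightarrow> h \<in> C" using IH unfolding lie_ideal_def by auto
lemma H_zero [simp]: "lzero G \<in> H" using IH unfolding lie_ideal_def by auto
lemma H_add [simp]: "h \<in> H \<Longrightarrow> h' \<in> H \<Longrightarrow> ad h h' \<in> H" using IH unfolding lie_ideal_def by auto
lemma H_neg [simp]: "h \<in> H \<Longrightarrow> ng h \<in> H" using IH unfolding lie_ideal_def by auto
lemma H_sm [simp]: "h \<in> H \<Longrightarrow> sm c h \<in> H" using IH unfolding lie_ideal_def by auto
lemma H_brl [simp]: "g \<in> C \<Longrightarrow> h \<in> H \<Longrightarrow> br g h \<in> H" using IH unfolding lie_ideal_def by auto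
lemma H_brr [simp]: "h \<in> H \<Longrightarrow> g \<in> C \<Longrightarrow> br h g \<in> H"
  using g.anti[of g h] H_sub by simp

lemma H_C [simp]: "h \<in> H \<Longrightarrow> h \<in> C" by (rule H_sub)

lemma rel_in: "r \<in> qtensor_rels G H q \<Longrightarrow> r \<in> I"
  by (rule I_R) simp

lemma R_kill: "y \<notin> qgens G H \<Longrightarrow> fm_gen y \<in> I"
  by (rule rel_in) (auto simp: qtensor_rels_def Let_def)

lemma R1a: "h \<in> H \<Longrightarrow> g \<in> C \<Longrightarrow> fm_smult c (tg h g) - tg (sm c h) g \<in> I"
  by (rule rel_in, unfold qtensor_rels_def Let_def, rule UnI1, rule UnI1, rule UnI1, rule UnI1, rule UnI1, rule UnI1, rule UnI1, rule UnI1, rule UnI1, rule UnI1, rule UnI2, blast)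
lemma R1b: "h \<in> H \<Longrightarrow> g \<in> C \<Longrightarrow> fm_smult c (tg h g) - tg h (sm c g) \<in> I"
  by (rule rel_in, unfold qtensor_rels_def Let_def, rule UnI1, rule UnI1, rule UnI1, rule UnI1, rule UnI1, rule UnI1, rule UnI1, rule UnI1, rule UnI1, rule UnI2, blast)
lemma R2: "h \<in> H \<Longrightarrow> h' \<in> H \<Longrightarrow> g \<in> C \<Longrightarrow> tg (ad h h') g - (tg h g + tg h' g) \<in> I"
  by (rule rel_in, unfold qtensor_rels_def Let_def, rule UnI1, rule UnI1, rule UnI1, rule UnI1, rule UnI1, rule UnI1, rule UnI1, rule UnI1, rule UnI2, blast)
lemma R3: "h \<in> H \<Longrightarrow> g \<in> C \<Longrightarrow> g' \<in> C \<Longrightarrow> tg h (ad g g') - (tg h g + tg h g') \<in> I"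
  by (rule rel_in, unfold qtensor_rels_def Let_def, rule UnI1, rule UnI1, rule UnI1, rule UnI1, rule UnI1, rule UnI1, rule UnI1, rule UnI2, blast)
lemma R4: "h \<in> H \<Longrightarrow> h' \<in> H \<Longrightarrow> g \<in> C \<Longrightarrow> tg (br h h') g - (tg h (br h' g) - tg h' (br h g)) \<in> I"
  by (rule rel_in, unfold qtensor_rels_def Let_def, rule UnI1, rule UnI1, rule UnI1, rule UnI1, rule UnI1, rule UnI1, rule UnI2, blast)
lemma R5: "h \<in> H \<Longrightarrow> g \<in> C \<Longrightarrow> g' \<in> C \<Longrightarrow> tg h (br g g') - (tg (br g' h) g - tg (br g h) g') \<in> I"
  by (rule rel_in, unfold qtensor_rels_def Let_def, rule UnI1, rule UnI1, rule UnI1, rule UnI1, rule UnI1, rule UnI2, blast)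
lemma R6: "h \<in> H \<Longrightarrow> g \<in> C \<Longrightarrow> h' \<in> H \<Longrightarrow> g' \<in> C \<Longrightarrow> fm_br (tg h g) (tg h' g') - tg (br h g) (br h' g') \<in> I"
  by (rule rel_in, unfold qtensor_rels_def Let_def, rule UnI1, rule UnI1, rule UnI1, rule UnI1, rule UnI2, blast)
lemma R7: "h' \<in> H \<Longrightarrow> h \<in> H \<Longrightarrow> g \<in> C \<Longrightarrow>
    fm_br (cu h') (tg h g) - (tg (br (sm sg h') h) g + tg h (br (sm sg h') g)) \<in> I"
  by (rule rel_in, unfold qtensor_rels_def Let_def, rule UnI1, rule UnI1, rule UnI1, rule UnI2, blast)
lemma R8: "h \<in> H \<Longrightarrow> h' \<in> H \<Longrightarrow> cu (ad (sm c h) (sm c' h')) - (fm_smult c (cu h) + fm_smult c' (cu h')) \<in> I"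
  by (rule rel_in, unfold qtensor_rels_def Let_def, rule UnI1, rule UnI1, rule UnI2, blast)
lemma R9: "h \<in> H \<Longrightarrow> h' \<in> H \<Longrightarrow> fm_br (cu h) (cu h') - tg (sm sg h) (sm sg h') \<in> I"
  by (rule rel_in, unfold qtensor_rels_def Let_def, rule UnI1, rule UnI2, blast)
lemma R10: "h \<in> H \<Longrightarrow> g \<in> C \<Longrightarrow> cu (br h g) - fm_smult sg (tg h g) \<in> I"
  by (rule rel_in, unfold qtensor_rels_def Let_def, rule UnI2, blast)

end

lemma (in nalg) sub_zero_iff [simp]:
  "\<lbrakk>x \<in> lcarrier L; y \<in> lcarrier L\<rbrakk> \<Longrightarrow> ladd L x (lneg L y) = lzero L \<longleftrightarrow> x = y"
  using sub_eq_zero[of x y] by auto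

lemma (in lie) J2: "\<lbrakk>h \<in> lcarrier L; g \<in> lcarrier L; g' \<in> lcarrier L\<rbrakk> \<Longrightarrow>
  lbr L h (lbr L g g') = ladd L (lbr L (lbr L g' h) g) (lneg L (lbr L (lbr L g h) g'))"
proof -
  assume a: "h \<in> lcarrier L" "g \<in> lcarrier L" "g' \<in> lcarrier L"
  have "lbr L h (lbr L g g') = ladd L (lbr L (lbr L h g) g') (lbr L g (lbr L h g'))" using a by (rule J3)
  also have "lbr L (lbr L h g) g' = lneg L (lbr L (lbr L g h) g')" using a by (simp add: anti[of g h] br_neg_left)
  also have "lbr L g (lbr L h g') = lbr L (lbr L g' h) g"
  proof -
    have "lbr L g (lbr L h g') = lbr L g (lneg L (lbr L g' h))" using a by (simp add: anti[of g' h])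
    also have "\<dots> = lneg L (lbr L g (lbr L g' h))" using a by (simp add: br_neg_right)
    also have "lbr L g (lbr L g' h) = lneg L (lbr L (lbr L g' h) g)" using a by (simp add: anti[of "lbr L g' h" g])
    finally show ?thesis using a by simp
  qed
  finally show ?thesis using a by (simp add: add_comm)
qed

lemma (in nalg) lsum_in:
  assumes "\<And>x. x \<in> A \<Longrightarrow> f x \<in> S" "S \<subseteq> lcarrier L" "lzero L \<in> S"
    "\<And>x y. x \<in> S \<Longrightarrow> y \<in> S \<Longrightarrow> ladd L x y \<in> S"
  shows "lsum f A \<in> S"
  using assms(1)
proof (induction A rule: infinite_finite_induct)
  case (infinite A) then show ?case using assms by (simp add: lsum_infinite)
next
  case empty then show ?case using assms by simp
next
  case (insert a A) then show ?case using assms by (subst lsum_insert) auto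
qed

context qsetup
begin

lemma I_eq: "X = Y \<Longrightarrow> Y \<in> I \<Longrightarrow> X \<in> I" by simp

lemma Lt0l: "g \<in> C \<Longrightarrow> tg (lzero G) g \<in> I"
  using I_neg[OF R1a[of "lzero G" g 0]] by simp
lemma Lt0r: "h \<in> H \<Longrightarrow> tg h (lzero G) \<in> I"
  using I_neg[OF R1b[of h "lzero G" 0]] by simp
lemma Lcu0: "cu (lzero G) \<in> I"
  using R8[of "lzero G" "lzero G" 0 0] by simp

lemma L2: "\<lbrakk>h \<in> H; h' \<in> H; g \<in> C; a = ad h h'\<rbrakk> \<Longrightarrow> tg a g - (tg h g + tg h' g) \<in> I"
  using R2 by simp
lemma L3: "\<lbrakk>h \<in> H; g \<in> C; g' \<in> C; a = ad g g'\<rbrakk> \<Longrightarrow> tg h a - (tg h g + tg h g') \<in> I"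
  using R3 by simp
lemma Lneg1: "\<lbrakk>h \<in> H; g \<in> C\<rbrakk> \<Longrightarrow> tg (ng h) g + tg h g \<in> I"
  using I_neg[OF R1a[of h g "-1"]] by (simp add: g.sm_minus_one fm_smult_minus_one add.commute)
lemma Lneg2: "\<lbrakk>h \<in> H; g \<in> C\<rbrakk> \<Longrightarrow> tg h (ng g) + tg h g \<in> I"
  using I_neg[OF R1b[of h g "-1"]] by (simp add: g.sm_minus_one fm_smult_minus_one add.commute)
lemma L2m: "\<lbrakk>h \<in> H; h' \<in> H; g \<in> C; a = ad h (ng h')\<rbrakk> \<Longrightarrow> tg a g - (tg h g - tg h' g) \<in> I"
proof -
  assume a: "h \<in> H" "h' \<in> H" "g \<in> C" "a = ad h (ng h')"
  have "tg a g - (tg h g - tg h' g) = (tg a g - (tg h g + tg (ng h') g)) + (tg (ng h') g + tg h' g)" by simp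
  also have "\<dots> \<in> I" using a I_add[OF R2[of h "ng h'" g] Lneg1[of h' g]] by simp
  finally show ?thesis .
qed
lemma L3m: "\<lbrakk>h \<in> H; g \<in> C; g' \<in> C; a = ad g (ng g')\<rbrakk> \<Longrightarrow> tg h a - (tg h g - tg h g') \<in> I"
proof -
  assume a: "h \<in> H" "g \<in> C" "g' \<in> C" "a = ad g (ng g')"
  have "tg h a - (tg h g - tg h g') = (tg h a - (tg h g + tg h (ng g'))) + (tg h (ng g') + tg h g')" by simp
  also have "\<dots> \<in> I" using a I_add[OF R3[of h g "ng g'"] Lneg2[of h g']] by simp
  finally show ?thesis .
qed
lemma Lcu_add: "\<lbrakk>h \<in> H; h' \<in> H; a = ad h h'\<rbrakk> \<Longrightarrow> cu a - (cu h + cu h') \<in> I"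
  using R8[of h h' 1 1] by simp
lemma Lcu_sm: "\<lbrakk>h \<in> H; a = sm c h\<rbrakk> \<Longrightarrow> cu a - fm_smult c (cu h) \<in> I"
  using R8[of h h c 0] by simp
lemma Lcu_neg: "h \<in> H \<Longrightarrow> cu (ng h) + cu h \<in> I"
  using Lcu_sm[of h "ng h" "-1"] by (simp add: g.sm_minus_one fm_smult_minus_one)
lemma Lcu_sub: "\<lbrakk>h \<in> H; h' \<in> H; a = ad h (ng h')\<rbrakk> \<Longrightarrow> cu a - (cu h - cu h') \<in> I"
proof -
  assume a: "h \<in> H" "h' \<in> H" "a = ad h (ng h')"
  have "cu a - (cu h - cu h') = (cu a - (cu h + cu (ng h'))) + (cu (ng h') + cu h')" by simp
  also have "\<dots> \<in> I" using a I_add[OF Lcu_add[of h "ng h'"] Lcu_neg[of h']] by simp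
  finally show ?thesis .
qed
lemma Lcu_zero: "\<lbrakk>a = lzero G\<rbrakk> \<Longrightarrow> cu a \<in> I"
  using Lcu0 by simp

definition fgen :: "'a qgen \<Rightarrow> 'a" where
  "fgen x = (case x of QT h g \<Rightarrow> (if h \<in> H \<and> g \<in> C then br h g else lzero G)
                     | QC h \<Rightarrow> (if h \<in> H then sm sg h else lzero G))"

lemma fgen_cl [simp]: "fgen x \<in> C"
  by (auto simp: fgen_def split: qgen.split)

lemma fgen_QT [simp]: "h \<in> H \<Longrightarrow> g \<in> C \<Longrightarrow> fgen (QT h g) = br h g"
  by (simp add: fgen_def)
lemma fgen_QC [simp]: "h \<in> H \<Longrightarrow> fgen (QC h) = sm sg h"
  by (simp add: fgen_def)
lemma fgen_kill: "x \<notin> qgens G H \<Longrightarrow> fgen x = lzero G"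
  by (auto simp: fgen_def qgens_def split: qgen.split)
lemma fgen_H: "fgen x \<in> H"
  by (auto simp: fgen_def split: qgen.split)

definition Fh :: "('a qgen, 'r) fm \<Rightarrow> 'a" where
  "Fh p = g.gext (htree G fgen) p"

lemma htree_fgen: "htree G fgen u \<in> C" by (rule g.htree_cl) simp

lemma Fh_cl [simp]: "Fh p \<in> C" unfolding Fh_def using htree_fgen by simp
lemma Fh_add [simp]: "Fh (a + b) = ad (Fh a) (Fh b)" unfolding Fh_def using htree_fgen by (rule g.gext_add)
lemma Fh_diff [simp]: "Fh (a - b) = ad (Fh a) (ng (Fh b))" unfolding Fh_def using htree_fgen by (rule g.gext_diff)
lemma Fh_neg [simp]: "Fh (- a) = ng (Fh a)" unfolding Fh_def using htree_fgen by (rule g.gext_neg)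
lemma Fh_sm [simp]: "Fh (fm_smult c a) = sm c (Fh a)" unfolding Fh_def using htree_fgen by (rule g.gext_smult)
lemma Fh_zero [simp]: "Fh 0 = lzero G" unfolding Fh_def by simp
lemma Fh_br [simp]: "Fh (fm_br a b) = br (Fh a) (Fh b)" unfolding Fh_def using htree_fgen by (rule g.gext_hom) simp
lemma Fh_gen [simp]: "Fh (fm_gen x) = fgen x"
  unfolding Fh_def fm_gen_tree using htree_fgen by (simp add: g.gext_tree)

lemma Fh_H: "Fh p \<in> H"
proof -
  have "\<forall>u. htree G fgen u \<in> H"
  proof
    fix u show "htree G fgen u \<in> H" by (induction u) (auto simp: fgen_H)
  qed
  then show ?thesis unfolding Fh_def g.gext_def
    by (intro g.lsum_in) auto
qed

lemma O1: assumes "r \<in> RR" shows "Fh r = lzero G"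
proof -
  from assms consider (E) "r \<in> E" | (Q) "r \<in> qtensor_rels G H q" by blast
  then show ?thesis
  proof cases
    case E
    then obtain h where "h \<in> H" "r = tg h h" using Ecases by auto
    then show ?thesis by (simp add: g.alt)
  next
    case Q
    then show ?thesis
      unfolding qtensor_rels_def Let_def
      apply (elim UnE CollectE exE conjE)
      subgoal by (simp add: fgen_kill)
      subgoal by (simp add: g.br_sm_left)
      subgoal by (simp add: g.br_sm_right)
      subgoal by (simp add: g.br_add_left)
      subgoal by (simp add: g.br_add_right)
      subgoal by simp (rule g.J1, auto)
      subgoal by simp (rule g.J2, auto)
      subgoal by simp
      subgoal by simp (rule g.J3, auto)
      subgoal by (simp add: g.sm_add g.sm_sm[symmetric] mult.commute)
      subgoal by simp
      subgoal by simp
      done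
  qed
qed

end

context qsetup
begin

lemma I_pm: "d \<in> I \<Longrightarrow> X - d \<in> I \<Longrightarrow> X \<in> I"
  using I_add[of "X - d" RR d] by simp
lemma I_pp: "d \<in> I \<Longrightarrow> X + d \<in> I \<Longrightarrow> X \<in> I"
  using I_diff[of "X + d" RR d] by simp

definition dd :: "'a \<Rightarrow> 'a qgen \<Rightarrow> ('a qgen, 'r) fm" where
  "dd g0 x = (case x of QT h g \<Rightarrow> (if h \<in> H \<and> g \<in> C then tg (br g0 h) g + tg h (br g0 g) else 0)
                      | QC h \<Rightarrow> (if h \<in> H then cu (br g0 h) else 0))"

lemma dd_QT [simp]: "h \<in> H \<Longrightarrow> g \<in> C \<Longrightarrow> dd g0 (QT h g) = tg (br g0 h) g + tg h (br g0 g)"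
  by (simp add: dd_def)
lemma dd_QC [simp]: "h \<in> H \<Longrightarrow> dd g0 (QC h) = cu (br g0 h)"
  by (simp add: dd_def)
lemma dd_kill: "x \<notin> qgens G H \<Longrightarrow> dd g0 x = 0"
  by (auto simp: dd_def qgens_def split: qgen.split)

lemma qgens_cases:
  obtains (kill) "x \<notin> qgens G H" | (T) h g where "x = QT h g" "h \<in> H" "g \<in> C" | (Cu) h where "x = QC h" "h \<in> H"
  by (cases x) (auto simp: qgens_def)

context
  fixes g0 assumes g0: "g0 \<in> C"
begin

lemma D_kill: "y \<notin> qgens G H \<Longrightarrow> Dv (dd g0) (fm_gen y) \<in> I"
  by (simp add: dd_kill I_zero)

lemma D1a: assumes "h \<in> H" "g \<in> C" shows "Dv (dd g0) (fm_smult c (tg h g) - tg (sm c h) g) \<in> I"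
proof -
  have f1: "fm_smult c (tg (br g0 h) g) - tg (sm c (br g0 h)) g \<in> I" using assms g0 by (intro R1a) auto
  have f2: "fm_smult c (tg h (br g0 g)) - tg (sm c h) (br g0 g) \<in> I" using assms g0 by (intro R1a) auto
  show ?thesis
    by (rule I_pm[OF f1] I_pp[OF f1], rule I_pm[OF f2] I_pp[OF f2],
        (simp add: assms g0 g.br_sm_right algebra_simps I_zero; fail))
qed

lemma D1b: assumes "h \<in> H" "g \<in> C" shows "Dv (dd g0) (fm_smult c (tg h g) - tg h (sm c g)) \<in> I"
proof -
  have f1: "fm_smult c (tg (br g0 h) g) - tg (br g0 h) (sm c g) \<in> I" using assms g0 by (intro R1b) auto
  have f2: "fm_smult c (tg h (br g0 g)) - tg h (sm c (br g0 g)) \<in> I" using assms g0 by (intro R1b) auto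
  show ?thesis
    by (rule I_pm[OF f1] I_pp[OF f1], rule I_pm[OF f2] I_pp[OF f2],
        (simp add: assms g0 g.br_sm_right algebra_simps I_zero; fail))
qed

lemma D2: assumes "h \<in> H" "h' \<in> H" "g \<in> C" shows "Dv (dd g0) (tg (ad h h') g - (tg h g + tg h' g)) \<in> I"
proof -
  have f1: "tg (ad (br g0 h) (br g0 h')) g - (tg (br g0 h) g + tg (br g0 h') g) \<in> I" using assms g0 by (intro R2) auto
  have f2: "tg (ad h h') (br g0 g) - (tg h (br g0 g) + tg h' (br g0 g)) \<in> I" using assms g0 by (intro R2) auto
  show ?thesis
    by (rule I_pm[OF f1] I_pp[OF f1], rule I_pm[OF f2] I_pp[OF f2],
        (simp add: assms g0 g.br_add_right algebra_simps I_zero; fail))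
qed

lemma D3: assumes "h \<in> H" "g \<in> C" "g' \<in> C" shows "Dv (dd g0) (tg h (ad g g') - (tg h g + tg h g')) \<in> I"
proof -
  have f1: "tg (br g0 h) (ad g g') - (tg (br g0 h) g + tg (br g0 h) g') \<in> I" using assms g0 by (intro R3) auto
  have f2: "tg h (ad (br g0 g) (br g0 g')) - (tg h (br g0 g) + tg h (br g0 g')) \<in> I" using assms g0 by (intro R3) auto
  show ?thesis
    by (rule I_pm[OF f1] I_pp[OF f1], rule I_pm[OF f2] I_pp[OF f2],
        (simp add: assms g0 g.br_add_right algebra_simps I_zero; fail))
qed

lemma D4: assumes "h \<in> H" "h' \<in> H" "g \<in> C"
  shows "Dv (dd g0) (tg (br h h') g - (tg h (br h' g) - tg h' (br h g))) \<in> I"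
proof -
  have f1: "tg (br g0 (br h h')) g - (tg (br (br g0 h) h') g + tg (br h (br g0 h')) g) \<in> I"
    using assms g0 by (intro L2) (auto simp: g.J3[of g0 h h'])
  have f2: "tg h (br g0 (br h' g)) - (tg h (br (br g0 h') g) + tg h (br h' (br g0 g))) \<in> I"
    using assms g0 by (intro L3) (auto simp: g.J3[of g0 h' g])
  have f3: "tg h' (br g0 (br h g)) - (tg h' (br (br g0 h) g) + tg h' (br h (br g0 g))) \<in> I"
    using assms g0 by (intro L3) (auto simp: g.J3[of g0 h g])
  have f4: "tg (br (br g0 h) h') g - (tg (br g0 h) (br h' g) - tg h' (br (br g0 h) g)) \<in> I"
    using assms g0 by (intro R4) auto
  have f5: "tg (br h (br g0 h')) g - (tg h (br (br g0 h') g) - tg (br g0 h') (br h g)) \<in> I"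
    using assms g0 by (intro R4) auto
  have f6: "tg (br h h') (br g0 g) - (tg h (br h' (br g0 g)) - tg h' (br h (br g0 g))) \<in> I"
    using assms g0 by (intro R4) auto
  show ?thesis
    by (rule I_pm[OF f1] I_pp[OF f1], rule I_pm[OF f2] I_pp[OF f2], rule I_pm[OF f3] I_pp[OF f3],
        rule I_pm[OF f4] I_pp[OF f4], rule I_pm[OF f5] I_pp[OF f5], rule I_pm[OF f6] I_pp[OF f6],
        (simp add: assms g0 algebra_simps I_zero; fail))
qed


lemma D5: assumes "h \<in> H" "g \<in> C" "g' \<in> C"
  shows "Dv (dd g0) (tg h (br g g') - (tg (br g' h) g - tg (br g h) g')) \<in> I"
proof -
  have f1: "tg h (br g0 (br g g')) - (tg h (br (br g0 g) g') + tg h (br g (br g0 g'))) \<in> I"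
    using assms g0 by (intro L3) (auto simp: g.J3[of g0 g g'])
  have f2: "tg (br g0 (br g' h)) g - (tg (br (br g0 g') h) g + tg (br g' (br g0 h)) g) \<in> I"
    using assms g0 by (intro L2) (auto simp: g.J3[of g0 g' h])
  have f3: "tg (br g0 (br g h)) g' - (tg (br (br g0 g) h) g' + tg (br g (br g0 h)) g') \<in> I"
    using assms g0 by (intro L2) (auto simp: g.J3[of g0 g h])
  have f4: "tg (br g0 h) (br g g') - (tg (br g' (br g0 h)) g - tg (br g (br g0 h)) g') \<in> I"
    using assms g0 by (intro R5) auto
  have f5: "tg h (br (br g0 g) g') - (tg (br g' h) (br g0 g) - tg (br (br g0 g) h) g') \<in> I"
    using assms g0 by (intro R5) auto
  have f6: "tg h (br g (br g0 g')) - (tg (br (br g0 g') h) g - tg (br g h) (br g0 g')) \<in> I"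
    using assms g0 by (intro R5) auto
  show ?thesis
    by (rule I_pm[OF f1] I_pp[OF f1], rule I_pm[OF f2] I_pp[OF f2], rule I_pm[OF f3] I_pp[OF f3],
        rule I_pm[OF f4] I_pp[OF f4], rule I_pm[OF f5] I_pp[OF f5], rule I_pm[OF f6] I_pp[OF f6],
        (simp add: assms g0 algebra_simps I_zero; fail))
qed

lemma D6: assumes "h \<in> H" "g \<in> C" "h' \<in> H" "g' \<in> C"
  shows "Dv (dd g0) (fm_br (tg h g) (tg h' g') - tg (br h g) (br h' g')) \<in> I"
proof -
  have f1: "fm_br (tg (br g0 h) g) (tg h' g') - tg (br (br g0 h) g) (br h' g') \<in> I" using assms g0 by (intro R6) auto
  have f2: "fm_br (tg h (br g0 g)) (tg h' g') - tg (br h (br g0 g)) (br h' g') \<in> I" using assms g0 by (intro R6) auto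
  have f3: "fm_br (tg h g) (tg (br g0 h') g') - tg (br h g) (br (br g0 h') g') \<in> I" using assms g0 by (intro R6) auto
  have f4: "fm_br (tg h g) (tg h' (br g0 g')) - tg (br h g) (br h' (br g0 g')) \<in> I" using assms g0 by (intro R6) auto
  have f5: "tg (br g0 (br h g)) (br h' g') - (tg (br (br g0 h) g) (br h' g') + tg (br h (br g0 g)) (br h' g')) \<in> I"
    using assms g0 by (intro L2) (auto simp: g.J3[of g0 h g])
  have f6: "tg (br h g) (br g0 (br h' g')) - (tg (br h g) (br (br g0 h') g') + tg (br h g) (br h' (br g0 g'))) \<in> I"
    using assms g0 by (intro L3) (auto simp: g.J3[of g0 h' g'])
  show ?thesis
    by (rule I_pm[OF f1] I_pp[OF f1], rule I_pm[OF f2] I_pp[OF f2], rule I_pm[OF f3] I_pp[OF f3],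
        rule I_pm[OF f4] I_pp[OF f4], rule I_pm[OF f5] I_pp[OF f5], rule I_pm[OF f6] I_pp[OF f6],
        (simp add: assms g0 algebra_simps I_zero; fail))
qed

lemma D7: assumes "h' \<in> H" "h \<in> H" "g \<in> C"
  shows "Dv (dd g0) (fm_br (cu h') (tg h g) - (tg (br (sm sg h') h) g + tg h (br (sm sg h') g))) \<in> I"
proof -
  have e1: "br g0 (br (sm sg h') h) = ad (br (sm sg (br g0 h')) h) (br (sm sg h') (br g0 h))"
    using assms g0 by (simp add: g.J3[of g0 "sm sg h'" h] g.br_sm_right)
  have e2: "br g0 (br (sm sg h') g) = ad (br (sm sg (br g0 h')) g) (br (sm sg h') (br g0 g))"
    using assms g0 by (simp add: g.J3[of g0 "sm sg h'" g] g.br_sm_right)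
  have f1: "fm_br (cu (br g0 h')) (tg h g) - (tg (br (sm sg (br g0 h')) h) g + tg h (br (sm sg (br g0 h')) g)) \<in> I"
    using assms g0 by (intro R7) auto
  have f2: "fm_br (cu h') (tg (br g0 h) g) - (tg (br (sm sg h') (br g0 h)) g + tg (br g0 h) (br (sm sg h') g)) \<in> I"
    using assms g0 by (intro R7) auto
  have f3: "fm_br (cu h') (tg h (br g0 g)) - (tg (br (sm sg h') h) (br g0 g) + tg h (br (sm sg h') (br g0 g))) \<in> I"
    using assms g0 by (intro R7) auto
  have f4: "tg (br g0 (br (sm sg h') h)) g - (tg (br (sm sg (br g0 h')) h) g + tg (br (sm sg h') (br g0 h)) g) \<in> I"
    using assms g0 by (intro L2 e1) auto
  have f5: "tg h (br g0 (br (sm sg h') g)) - (tg h (br (sm sg (br g0 h')) g) + tg h (br (sm sg h') (br g0 g))) \<in> I"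
    using assms g0 by (intro L3 e2) auto
  show ?thesis
    by (rule I_pm[OF f1] I_pp[OF f1], rule I_pm[OF f2] I_pp[OF f2], rule I_pm[OF f3] I_pp[OF f3],
        rule I_pm[OF f4] I_pp[OF f4], rule I_pm[OF f5] I_pp[OF f5],
        (simp add: assms g0 algebra_simps I_zero; fail))
qed

lemma D8: assumes "h \<in> H" "h' \<in> H"
  shows "Dv (dd g0) (cu (ad (sm c h) (sm c' h')) - (fm_smult c (cu h) + fm_smult c' (cu h'))) \<in> I"
proof -
  have f1: "cu (ad (sm c (br g0 h)) (sm c' (br g0 h'))) - (fm_smult c (cu (br g0 h)) + fm_smult c' (cu (br g0 h'))) \<in> I"
    using assms g0 by (intro R8) auto
  show ?thesis
    by (rule I_pm[OF f1] I_pp[OF f1],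
        (simp add: assms g0 g.br_add_right g.br_sm_right algebra_simps I_zero; fail))
qed

lemma D9: assumes "h \<in> H" "h' \<in> H"
  shows "Dv (dd g0) (fm_br (cu h) (cu h') - tg (sm sg h) (sm sg h')) \<in> I"
proof -
  have f1: "fm_br (cu (br g0 h)) (cu h') - tg (sm sg (br g0 h)) (sm sg h') \<in> I" using assms g0 by (intro R9) auto
  have f2: "fm_br (cu h) (cu (br g0 h')) - tg (sm sg h) (sm sg (br g0 h')) \<in> I" using assms g0 by (intro R9) auto
  show ?thesis
    by (rule I_pm[OF f1] I_pp[OF f1], rule I_pm[OF f2] I_pp[OF f2],
        (simp add: assms g0 g.br_sm_right algebra_simps I_zero; fail))
qed

lemma D10: assumes "h \<in> H" "g \<in> C"
  shows "Dv (dd g0) (cu (br h g) - fm_smult sg (tg h g)) \<in> I"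
proof -
  have f1: "cu (br (br g0 h) g) - fm_smult sg (tg (br g0 h) g) \<in> I" using assms g0 by (intro R10) auto
  have f2: "cu (br h (br g0 g)) - fm_smult sg (tg h (br g0 g)) \<in> I" using assms g0 by (intro R10) auto
  have f3: "cu (br g0 (br h g)) - (cu (br (br g0 h) g) + cu (br h (br g0 g))) \<in> I"
    using assms g0 by (intro Lcu_add) (auto simp: g.J3[of g0 h g])
  show ?thesis
    by (rule I_pm[OF f1] I_pp[OF f1], rule I_pm[OF f2] I_pp[OF f2], rule I_pm[OF f3] I_pp[OF f3],
        (simp add: assms g0 algebra_simps I_zero; fail))
qed

lemma tsym: assumes "E \<noteq> {}" "x \<in> H" "y \<in> H" shows "tg x y + tg y x \<in> I"
proof -
  have EE: "E = {fm_gen (QT h h) | h. h \<in> H}" using Ecases assms by auto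
  have Et: "z \<in> H \<Longrightarrow> tg z z \<in> I" for z by (rule fm_ideal.base) (auto simp: EE)
  let ?s = "ad x y"
  have f0: "tg ?s ?s \<in> I" using assms by (intro Et) auto
  have fx: "tg x x \<in> I" using assms by (intro Et) auto
  have fy: "tg y y \<in> I" using assms by (intro Et) auto
  have f1: "tg ?s ?s - (tg x ?s + tg y ?s) \<in> I" using assms by (intro R2) auto
  have f2: "tg x ?s - (tg x x + tg x y) \<in> I" using assms by (intro R3) auto
  have f3: "tg y ?s - (tg y x + tg y y) \<in> I" using assms by (intro R3) auto
  show ?thesis
    by (rule I_pm[OF f0] I_pp[OF f0], rule I_pm[OF fx] I_pp[OF fx], rule I_pm[OF fy] I_pp[OF fy],
        rule I_pm[OF f1] I_pp[OF f1], rule I_pm[OF f2] I_pp[OF f2], rule I_pm[OF f3] I_pp[OF f3],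
        (simp add: algebra_simps I_zero; fail))
qed

lemma DE: assumes "r \<in> E" shows "Dv (dd g0) r \<in> I"
proof -
  obtain h where h: "h \<in> H" "r = tg h h" using Ecases assms by auto
  have "E \<noteq> {}" using assms by auto
  then show ?thesis using h g0 tsym[of "br g0 h" h] by simp
qed

lemma O2: assumes "r \<in> RR" shows "Dv (dd g0) r \<in> I"
proof -
  from assms consider (E) "r \<in> E" | (Q) "r \<in> qtensor_rels G H q" by blast
  then show ?thesis
  proof cases
    case E then show ?thesis by (rule DE)
  next
    case Q
    from Q[unfolded qtensor_rels_def Let_def] show ?thesis
      apply (elim UnE CollectE exE conjE)
      by (hypsubst, (rule D_kill D1a D1b D2 D3 D4 D5 D6 D7 D8 D9 D10); assumption)+
  qed
qed

end

lemma SP: "span_hyp RR"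
  unfolding span_hyp_def
proof (intro allI)
  fix x y :: "'a qgen"
  show "\<exists>s\<in>fspan. fm_br (fm_gen x) (fm_gen y) - s \<in> I"
  proof (cases x rule: qgens_cases)
    case kill then show ?thesis using I_brr[OF R_kill[OF kill]] by (intro bexI[of _ 0]) (auto intro: fspan.intros)
  next
    case (T h g)
    show ?thesis
    proof (cases y rule: qgens_cases)
      case kill then show ?thesis using I_brl[OF R_kill[OF kill]] by (intro bexI[of _ 0]) (auto intro: fspan.intros)
    next
      case (T h' g')
      then show ?thesis using \<open>x = QT h g\<close> \<open>h \<in> H\<close> \<open>g \<in> C\<close> R6[of h g h' g']
        by (intro bexI[of _ "tg (br h g) (br h' g')"]) (auto intro: fspan.intros)
    next
      case (Cu h')
      let ?s = "tg (br (sm sg h') h) g + tg h (br (sm sg h') g)"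
      have "fm_br (tg h g) (cu h') - fm_smult (-1) ?s = (fm_br (tg h g) (cu h') + fm_br (cu h') (tg h g)) - (fm_br (cu h') (tg h g) - ?s)"
        by (simp add: fm_smult_minus_one)
      also have "\<dots> \<in> I" using Cu T by (intro I_diff I_anti R7) auto
      finally show ?thesis using T Cu by (intro bexI[of _ "fm_smult (-1) ?s"]) (auto intro: fspan.intros)
    qed
  next
    case (Cu h')
    show ?thesis
    proof (cases y rule: qgens_cases)
      case kill then show ?thesis using I_brl[OF R_kill[OF kill]] by (intro bexI[of _ 0]) (auto intro: fspan.intros)
    next
      case (T h g)
      then show ?thesis using Cu R7[of h' h g]
        by (intro bexI[of _ "tg (br (sm sg h') h) g + tg h (br (sm sg h') g)"]) (auto intro: fspan.intros)
    next
      case (Cu h'')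
      then show ?thesis using \<open>x = QC h'\<close> \<open>h' \<in> H\<close> R9[of h' h'']
        by (intro bexI[of _ "tg (sm sg h') (sm sg h'')"]) (auto intro: fspan.intros)
    qed
  qed
qed

end

context qsetup
begin

lemma Dv_I: "g \<in> C \<Longrightarrow> p \<in> I \<Longrightarrow> Dv (dd g) p \<in> I"
  by (rule der_ideal[OF O2])

lemma xi_facts1: "lie_hom (PL RR) G (\<lambda>A. Fh (fm_rep A))"
  unfolding Fh_def by (rule hom_ext(1)[OF LG fgen_cl O1[unfolded Fh_def]])
lemma xi_facts2: "Fh (fm_rep (cls RR p)) = Fh p"
  unfolding Fh_def by (rule hom_ext(2)[OF LG fgen_cl O1[unfolded Fh_def]])
lemmas xi_facts = xi_facts1 xi_facts2

lemma Fh_eqI: "a - b \<in> I \<Longrightarrow> Fh a = Fh b"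
  using xi_facts(2)[of a] xi_facts(2)[of b] cls_eqI[of a b RR] by metis

lemma Fh_I: "a \<in> I \<Longrightarrow> Fh a = lzero G"
  using Fh_eqI[of a 0] by simp

lemma act_cls: "g \<in> C \<Longrightarrow> cls RR (Dv (dd g) (fm_rep (cls RR p))) = cls RR (Dv (dd g) p)"
  by (rule der_cls[OF O2])

lemma fm_induct:
  assumes resp: "\<And>a b. a - b \<in> I \<Longrightarrow> Q a \<Longrightarrow> Q b"
    and Q0: "Q 0" and Qadd: "\<And>a b. Q a \<Longrightarrow> Q b \<Longrightarrow> Q (a + b)"
    and Qsm: "\<And>c a. Q a \<Longrightarrow> Q (fm_smult c a)" and Qgen: "\<And>x. Q (fm_gen x)"
  shows "Q p"
proof -
  obtain s where s: "s \<in> fspan" "p - s \<in> I" using span_all[OF SP] by blast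
  have "Q s" using s(1) by (induction s rule: fspan.induct) (auto intro: Q0 Qadd Qsm Qgen)
  moreover have "s - p \<in> I" using I_neg[OF s(2)] by simp
  ultimately show ?thesis by (rule resp[rotated])
qed

lemma fm_induct_lin:
  assumes add: "\<And>a b. \<Phi> (a + b) = \<Phi> a + \<Phi> b" and sm: "\<And>c a. \<Phi> (fm_smult c a) = fm_smult c (\<Phi> a)"
    and pres: "\<And>a. a \<in> I \<Longrightarrow> \<Phi> a \<in> I" and gen: "\<And>x. \<Phi> (fm_gen x) \<in> I"
  shows "\<Phi> p \<in> I"
proof (rule fm_induct[where Q="\<lambda>p. \<Phi> p \<in> I"])
  fix a b assume ab: "a - b \<in> I" and pa: "\<Phi> a \<in> I"
  have e: "\<Phi> a = \<Phi> (a - b) + \<Phi> b" using add[of "a - b" b] by simp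
  have "\<Phi> a - \<Phi> (a - b) \<in> I" using I_diff[OF pa pres[OF ab]] .
  then show "\<Phi> b \<in> I" using e by simp
next
  show "\<Phi> 0 \<in> I" using sm[of 0 0] I_zero by simp
next
  fix a b assume "\<Phi> a \<in> I" "\<Phi> b \<in> I" then show "\<Phi> (a + b) \<in> I" unfolding add by (rule I_add)
next
  fix c a assume "\<Phi> a \<in> I" then show "\<Phi> (fm_smult c a) \<in> I" unfolding sm by (rule I_smult)
qed (rule gen)

lemma Dadd: assumes "g1 \<in> C" "g2 \<in> C"
  shows "Dv (dd (ad g1 g2)) p - (Dv (dd g1) p + Dv (dd g2) p) \<in> I"
proof (rule fm_induct_lin[where \<Phi>="\<lambda>p. Dv (dd (ad g1 g2)) p - (Dv (dd g1) p + Dv (dd g2) p)"])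
  fix a assume "a \<in> I"
  then show "Dv (dd (ad g1 g2)) a - (Dv (dd g1) a + Dv (dd g2) a) \<in> I"
    using assms by (intro I_diff I_add Dv_I) auto
next
  fix x show "Dv (dd (ad g1 g2)) (fm_gen x) - (Dv (dd g1) (fm_gen x) + Dv (dd g2) (fm_gen x)) \<in> I"
  proof (cases x rule: qgens_cases)
    case kill then show ?thesis by (simp add: dd_kill I_zero)
  next
    case (T h g)
    have f1: "tg (ad (br g1 h) (br g2 h)) g - (tg (br g1 h) g + tg (br g2 h) g) \<in> I" using T assms by (intro R2) auto
    have f2: "tg h (ad (br g1 g) (br g2 g)) - (tg h (br g1 g) + tg h (br g2 g)) \<in> I" using T assms by (intro R3) auto
    show ?thesis
      by (rule I_pm[OF f1] I_pp[OF f1], rule I_pm[OF f2] I_pp[OF f2],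
        (simp add: T assms g.br_add_left algebra_simps I_zero; fail))
  next
    case (Cu h)
    have f1: "cu (ad (br g1 h) (br g2 h)) - (cu (br g1 h) + cu (br g2 h)) \<in> I" using Cu assms by (intro Lcu_add) auto
    show ?thesis
      by (rule I_pm[OF f1] I_pp[OF f1], (simp add: Cu assms g.br_add_left algebra_simps I_zero; fail))
  qed
qed (simp_all add: algebra_simps)

lemma Dsm: assumes "g \<in> C"
  shows "Dv (dd (sm c g)) p - fm_smult c (Dv (dd g) p) \<in> I"
proof (rule fm_induct_lin[where \<Phi>="\<lambda>p. Dv (dd (sm c g)) p - fm_smult c (Dv (dd g) p)"])
  fix a assume "a \<in> I"
  then show "Dv (dd (sm c g)) a - fm_smult c (Dv (dd g) a) \<in> I"
    using assms by (intro I_diff I_smult Dv_I) auto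
next
  fix x show "Dv (dd (sm c g)) (fm_gen x) - fm_smult c (Dv (dd g) (fm_gen x)) \<in> I"
  proof (cases x rule: qgens_cases)
    case kill then show ?thesis by (simp add: dd_kill I_zero)
  next
    case (T h g')
    have f1: "fm_smult c (tg (br g h) g') - tg (sm c (br g h)) g' \<in> I" using T assms by (intro R1a) auto
    have f2: "fm_smult c (tg h (br g g')) - tg h (sm c (br g g')) \<in> I" using T assms by (intro R1b) auto
    show ?thesis
      by (rule I_pm[OF f1] I_pp[OF f1], rule I_pm[OF f2] I_pp[OF f2],
        (simp add: T assms g.br_sm_left algebra_simps I_zero; fail))
  next
    case (Cu h)
    have f1: "cu (sm c (br g h)) - fm_smult c (cu (br g h)) \<in> I" using Cu assms by (intro Lcu_sm) auto
    show ?thesis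
      by (rule I_pm[OF f1] I_pp[OF f1], (simp add: Cu assms g.br_sm_left algebra_simps I_zero; fail))
  qed
qed (simp_all add: algebra_simps)

lemma Dbr: assumes "g1 \<in> C" "g2 \<in> C"
  shows "Dv (dd (br g1 g2)) p - (Dv (dd g1) (Dv (dd g2) p) - Dv (dd g2) (Dv (dd g1) p)) \<in> I"
proof (rule fm_induct_lin[where \<Phi>="\<lambda>p. Dv (dd (br g1 g2)) p - (Dv (dd g1) (Dv (dd g2) p) - Dv (dd g2) (Dv (dd g1) p))"])
  fix a assume "a \<in> I"
  then show "Dv (dd (br g1 g2)) a - (Dv (dd g1) (Dv (dd g2) a) - Dv (dd g2) (Dv (dd g1) a)) \<in> I"
    using assms by (intro I_diff Dv_I) auto
next
  fix x show "Dv (dd (br g1 g2)) (fm_gen x) - (Dv (dd g1) (Dv (dd g2) (fm_gen x)) - Dv (dd g2) (Dv (dd g1) (fm_gen x))) \<in> I"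
  proof (cases x rule: qgens_cases)
    case kill then show ?thesis by (simp add: dd_kill I_zero)
  next
    case (T h g)
    have f1: "tg (br (br g1 g2) h) g - (tg (br g1 (br g2 h)) g - tg (br g2 (br g1 h)) g) \<in> I"
      using T assms by (intro L2m) (auto simp: g.J1[of g1 g2 h])
    have f2: "tg h (br (br g1 g2) g) - (tg h (br g1 (br g2 g)) - tg h (br g2 (br g1 g))) \<in> I"
      using T assms by (intro L3m) (auto simp: g.J1[of g1 g2 g])
    show ?thesis
      by (rule I_pm[OF f1] I_pp[OF f1], rule I_pm[OF f2] I_pp[OF f2],
        (simp add: T assms algebra_simps I_zero; fail))
  next
    case (Cu h)
    have f1: "cu (br (br g1 g2) h) - (cu (br g1 (br g2 h)) - cu (br g2 (br g1 h))) \<in> I"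
      using Cu assms by (intro Lcu_sub) (auto simp: g.J1[of g1 g2 h])
    show ?thesis
      by (rule I_pm[OF f1] I_pp[OF f1], (simp add: Cu assms algebra_simps I_zero; fail))
  qed
qed (simp_all add: algebra_simps)

lemma Dxi: assumes "g \<in> C" shows "Fh (Dv (dd g) p) = br g (Fh p)"
proof (rule fm_induct[where Q="\<lambda>p. Fh (Dv (dd g) p) = br g (Fh p)"])
  fix a b assume ab: "a - b \<in> I" and "Fh (Dv (dd g) a) = br g (Fh a)"
  moreover have "Fh (Dv (dd g) a) = Fh (Dv (dd g) b)" using Dv_I[OF assms ab] by (intro Fh_eqI) simp
  moreover have "Fh a = Fh b" using ab by (rule Fh_eqI)
  ultimately show "Fh (Dv (dd g) b) = br g (Fh b)" by simp
next
  fix x show "Fh (Dv (dd g) (fm_gen x)) = br g (Fh (fm_gen x))"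
  proof (cases x rule: qgens_cases)
    case kill then show ?thesis using assms by (simp add: dd_kill fgen_kill)
  next
    case (T h g')
    then show ?thesis using assms by (simp add: g.J3[of g h g'])
  next
    case (Cu h)
    then show ?thesis using assms by (simp add: g.br_sm_right)
  qed
qed (use assms in \<open>simp_all add: g.br_add_right g.br_sm_right\<close>)

lemma D0: "Dv (dd (lzero G)) p \<in> I"
proof (rule fm_induct_lin[where \<Phi>="Dv (dd (lzero G))"])
  fix a assume "a \<in> I" then show "Dv (dd (lzero G)) a \<in> I" by (intro Dv_I) auto
next
  fix x show "Dv (dd (lzero G)) (fm_gen x) \<in> I"
    by (cases x rule: qgens_cases) (auto simp: dd_kill I_zero intro!: I_add Lt0l Lt0r Lcu0)
qed simp_all

lemma E1: "Dv (dd (fgen x)) p - fm_br (fm_gen x) p \<in> I"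
proof (rule fm_induct_lin[where \<Phi>="\<lambda>p. Dv (dd (fgen x)) p - fm_br (fm_gen x) p"])
  fix a assume "a \<in> I" then show "Dv (dd (fgen x)) a - fm_br (fm_gen x) a \<in> I"
    by (intro I_diff Dv_I I_brl) auto
next
  fix y show "Dv (dd (fgen x)) (fm_gen y) - fm_br (fm_gen x) (fm_gen y) \<in> I"
  proof (cases x rule: qgens_cases)
    case kill
    then show ?thesis using D0[of "fm_gen y"] I_brr[OF R_kill[OF kill]] by (simp add: fgen_kill I_diff)
  next
    case (T h g)
    show ?thesis
    proof (cases y rule: qgens_cases)
      case kill then show ?thesis using I_brl[OF R_kill[OF kill]] by (simp add: dd_kill I_neg)
    next
      case (T h' g')
      have f1: "fm_br (tg h g) (tg h' g') - tg (br h g) (br h' g') \<in> I"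
        using T \<open>h \<in> H\<close> \<open>g \<in> C\<close> by (intro R6) auto
      have f2: "tg (br (br h g) h') g' - (tg (br h g) (br h' g') - tg h' (br (br h g) g')) \<in> I"
        using T \<open>h \<in> H\<close> \<open>g \<in> C\<close> by (intro R4) auto
      show ?thesis
        by (rule I_pm[OF f1] I_pp[OF f1], rule I_pm[OF f2] I_pp[OF f2],
          (simp add: T \<open>x = QT h g\<close> \<open>h \<in> H\<close> \<open>g \<in> C\<close> algebra_simps I_zero; fail))
    next
      case (Cu h')
      let ?x = "br h g"
      have f1: "fm_br (tg h g) (cu h') + fm_br (cu h') (tg h g) \<in> I" by (rule I_anti)
      have f2: "fm_br (cu h') (tg h g) - (tg (br (sm sg h') h) g + tg h (br (sm sg h') g)) \<in> I"
        using T Cu by (intro R7) auto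
      have f3: "tg (br (sm sg h') h) g - (tg (sm sg h') (br h g) - tg h (br (sm sg h') g)) \<in> I"
        using T Cu by (intro R4) auto
      have f4: "fm_smult sg (tg h' ?x) - tg (sm sg h') ?x \<in> I" using T Cu by (intro R1a) auto
      have f5: "cu (br h' ?x) - fm_smult sg (tg h' ?x) \<in> I" using T Cu by (intro R10) auto
      have f6: "cu (ad (br ?x h') (br h' ?x)) - (cu (br ?x h') + cu (br h' ?x)) \<in> I"
        using T Cu by (intro Lcu_add) auto
      have f7: "cu (ad (br ?x h') (br h' ?x)) \<in> I"
        using T Cu by (intro Lcu_zero) (simp add: g.anti[of ?x h'])
      show ?thesis
        by (rule I_pp[OF f1], rule I_pm[OF f2], rule I_pm[OF f3],
          rule I_pp[OF f4], rule I_pp[OF f5], rule I_pp[OF f6],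
          rule I_pm[OF f7],
          (simp add: T Cu algebra_simps I_zero; fail))
    qed
  next
    case (Cu h)
    show ?thesis
    proof (cases y rule: qgens_cases)
      case kill then show ?thesis using I_brl[OF R_kill[OF kill]] by (simp add: dd_kill I_neg)
    next
      case (T h' g')
      have f1: "fm_br (cu h) (tg h' g') - (tg (br (sm sg h) h') g' + tg h' (br (sm sg h) g')) \<in> I"
        using T Cu by (intro R7) auto
      show ?thesis
        by (rule I_pm[OF f1] I_pp[OF f1], (simp add: T Cu algebra_simps I_zero; fail))
    next
      case (Cu h')
      have f1: "fm_br (cu h) (cu h') - tg (sm sg h) (sm sg h') \<in> I"
        using Cu \<open>x = QC h\<close> \<open>h \<in> H\<close> by (intro R9) auto
      have f2: "cu (br (sm sg h) h') - fm_smult sg (tg (sm sg h) h') \<in> I"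
        using Cu \<open>h \<in> H\<close> by (intro R10) auto
      have f3: "fm_smult sg (tg (sm sg h) h') - tg (sm sg h) (sm sg h') \<in> I"
        using Cu \<open>h \<in> H\<close> by (intro R1b) auto
      show ?thesis
        by (rule I_pm[OF f1] I_pp[OF f1], rule I_pm[OF f2] I_pp[OF f2], rule I_pm[OF f3] I_pp[OF f3],
          (simp add: Cu \<open>x = QC h\<close> \<open>h \<in> H\<close> algebra_simps I_zero; fail))
    qed
  qed
qed (simp_all add: algebra_simps)

lemma E2: "\<forall>p'. Dv (dd (Fh p)) p' - fm_br p p' \<in> I"
proof (rule fm_induct[where Q="\<lambda>p. \<forall>p'. Dv (dd (Fh p)) p' - fm_br p p' \<in> I"])
  fix a b assume ab: "a - b \<in> I" and Qa: "\<forall>p'. Dv (dd (Fh a)) p' - fm_br a p' \<in> I"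
  show "\<forall>p'. Dv (dd (Fh b)) p' - fm_br b p' \<in> I"
  proof
    fix p'
    have "Dv (dd (Fh b)) p' - fm_br b p' = (Dv (dd (Fh a)) p' - fm_br a p') + fm_br (a - b) p'"
      using Fh_eqI[OF ab] by (simp add: algebra_simps)
    also have "\<dots> \<in> I" using Qa by (intro I_add[OF _ I_brr[OF ab]]) auto
    finally show "Dv (dd (Fh b)) p' - fm_br b p' \<in> I" .
  qed
next
  show "\<forall>p'. Dv (dd (Fh 0)) p' - fm_br 0 p' \<in> I" using D0 by simp
next
  fix a b assume Qa: "\<forall>p'. Dv (dd (Fh a)) p' - fm_br a p' \<in> I" and Qb: "\<forall>p'. Dv (dd (Fh b)) p' - fm_br b p' \<in> I"
  show "\<forall>p'. Dv (dd (Fh (a + b))) p' - fm_br (a + b) p' \<in> I"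
  proof
    fix p'
    have "Dv (dd (Fh (a + b))) p' - fm_br (a + b) p' =
      (Dv (dd (ad (Fh a) (Fh b))) p' - (Dv (dd (Fh a)) p' + Dv (dd (Fh b)) p'))
      + (Dv (dd (Fh a)) p' - fm_br a p') + (Dv (dd (Fh b)) p' - fm_br b p')"
      by (simp add: algebra_simps)
    also have "\<dots> \<in> I" using Qa Qb by (intro I_add[OF I_add[OF Dadd]]) auto
    finally show "Dv (dd (Fh (a + b))) p' - fm_br (a + b) p' \<in> I" .
  qed
next
  fix c a assume Qa: "\<forall>p'. Dv (dd (Fh a)) p' - fm_br a p' \<in> I"
  show "\<forall>p'. Dv (dd (Fh (fm_smult c a))) p' - fm_br (fm_smult c a) p' \<in> I"
  proof
    fix p'
    have "Dv (dd (Fh (fm_smult c a))) p' - fm_br (fm_smult c a) p' =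
      (Dv (dd (sm c (Fh a))) p' - fm_smult c (Dv (dd (Fh a)) p')) + fm_smult c (Dv (dd (Fh a)) p' - fm_br a p')"
      by (simp add: algebra_simps)
    also have "\<dots> \<in> I" using Qa by (intro I_add[OF Dsm I_smult]) auto
    finally show "Dv (dd (Fh (fm_smult c a))) p' - fm_br (fm_smult c a) p' \<in> I" .
  qed
next
  fix x show "\<forall>p'. Dv (dd (Fh (fm_gen x))) p' - fm_br (fm_gen x) p' \<in> I" using E1 by simp
qed

lemma Fker: "fm_smult sg p - cu (Fh p) \<in> I"
proof (rule fm_induct[where Q="\<lambda>p. fm_smult sg p - cu (Fh p) \<in> I"])
  fix a b assume ab: "a - b \<in> I" and Qa: "fm_smult sg a - cu (Fh a) \<in> I"
  have "fm_smult sg b - cu (Fh b) = (fm_smult sg a - cu (Fh a)) - fm_smult sg (a - b)"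
    using Fh_eqI[OF ab] by (simp add: algebra_simps)
  also have "\<dots> \<in> I" by (rule I_diff[OF Qa I_smult[OF ab]])
  finally show "fm_smult sg b - cu (Fh b) \<in> I" .
next
  show "fm_smult sg 0 - cu (Fh 0) \<in> I" using I_neg[OF Lcu0] by simp
next
  fix a b assume Qa: "fm_smult sg a - cu (Fh a) \<in> I" and Qb: "fm_smult sg b - cu (Fh b) \<in> I"
  have f: "cu (ad (Fh a) (Fh b)) - (cu (Fh a) + cu (Fh b)) \<in> I" by (intro Lcu_add Fh_H) simp
  have "fm_smult sg (a + b) - cu (Fh (a + b)) = (fm_smult sg a - cu (Fh a)) + (fm_smult sg b - cu (Fh b))
      - (cu (ad (Fh a) (Fh b)) - (cu (Fh a) + cu (Fh b)))"
    by (simp add: algebra_simps)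
  also have "\<dots> \<in> I" by (rule I_diff[OF I_add[OF Qa Qb] f])
  finally show "fm_smult sg (a + b) - cu (Fh (a + b)) \<in> I" .
next
  fix c a assume Qa: "fm_smult sg a - cu (Fh a) \<in> I"
  have f: "cu (sm c (Fh a)) - fm_smult c (cu (Fh a)) \<in> I" by (intro Lcu_sm Fh_H) simp
  have "fm_smult sg (fm_smult c a) - cu (Fh (fm_smult c a)) = fm_smult c (fm_smult sg a - cu (Fh a))
      - (cu (sm c (Fh a)) - fm_smult c (cu (Fh a)))"
    by (simp add: algebra_simps mult.commute)
  also have "\<dots> \<in> I" by (rule I_diff[OF I_smult[OF Qa] f])
  finally show "fm_smult sg (fm_smult c a) - cu (Fh (fm_smult c a)) \<in> I" .
next
  fix x show "fm_smult sg (fm_gen x) - cu (Fh (fm_gen x)) \<in> I"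
  proof (cases x rule: qgens_cases)
    case kill then show ?thesis using I_diff[OF I_smult[OF R_kill[OF kill]] Lcu0] by (simp add: fgen_kill)
  next
    case (T h g) then show ?thesis using I_neg[OF R10[of h g]] by simp
  next
    case (Cu h) then show ?thesis using I_neg[OF Lcu_sm[of h "sm sg h" sg]] by simp
  qed
qed

end

lemma forall_range: "(\<forall>x\<in>range f. P x) = (\<forall>a. P (f a))" by auto

context qsetup
begin

definition act :: "'a \<Rightarrow> ('a qgen, 'r) fm set \<Rightarrow> ('a qgen, 'r) fm set" where
  "act g A = cls RR (Dv (dd g) (fm_rep A))"
definition xi :: "('a qgen, 'r) fm set \<Rightarrow> 'a" where
  "xi A = Fh (fm_rep A)"

lemma act_c: "g \<in> C \<Longrightarrow> act g (cls RR p) = cls RR (Dv (dd g) p)"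
  unfolding act_def by (rule act_cls)
lemma xi_c: "xi (cls RR p) = Fh p"
  unfolding xi_def by (rule xi_facts2)

lemma LA: "lie_action G (PL RR) act"
  unfolding lie_action_def PL_carrier forall_range
proof (intro conjI ballI allI)
  fix g a assume "g \<in> C" show "act g (cls RR a) \<in> range (cls RR)"
    unfolding act_def by simp
next
  fix g g' a assume g: "g \<in> C" "g' \<in> C"
  show "act (ad g g') (cls RR a) = ladd (PL RR) (act g (cls RR a)) (act g' (cls RR a))"
    using g by (simp add: act_c cls_eq Dadd)
next
  fix g a b assume g: "g \<in> C"
  show "act g (ladd (PL RR) (cls RR a) (cls RR b)) = ladd (PL RR) (act g (cls RR a)) (act g (cls RR b))"
    using g by (simp add: act_c)
next
  fix c g a assume g: "g \<in> C"
  show "act (sm c g) (cls RR a) = lsmult (PL RR) c (act g (cls RR a))"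
    using g by (simp add: act_c cls_eq Dsm)
  show "act g (lsmult (PL RR) c (cls RR a)) = lsmult (PL RR) c (act g (cls RR a))"
    using g by (simp add: act_c)
next
  fix g g' a assume g: "g \<in> C" "g' \<in> C"
  show "act (br g g') (cls RR a) = ladd (PL RR) (act g (act g' (cls RR a))) (lneg (PL RR) (act g' (act g (cls RR a))))"
    using g Dbr[of g g' a] by (simp add: act_c cls_eq)
next
  fix g a b assume g: "g \<in> C"
  show "act g (lbr (PL RR) (cls RR a) (cls RR b)) = ladd (PL RR) (lbr (PL RR) (act g (cls RR a)) (cls RR b)) (lbr (PL RR) (cls RR a) (act g (cls RR b)))"
    using g by (simp add: act_c)
qed

lemma XH: "lie_hom (PL RR) G xi"
  unfolding xi_def by (rule xi_facts1)

lemma QCM: "q_crossed_module q (PL RR) G xi act"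
  unfolding q_crossed_module_def
proof (intro conjI)
  show "lie_algebra (PL RR)" by (rule PL_lie)
  show "lie_algebra G" by (rule LG)
  show "lie_hom (PL RR) G xi" by (rule XH)
  show "lie_action G (PL RR) act" by (rule LA)
  show "\<forall>g\<in>C. \<forall>k\<in>lcarrier (PL RR). xi (act g k) = br g (xi k)"
    unfolding PL_carrier forall_range
  proof (intro ballI allI)
    fix g p assume g: "g \<in> C"
    show "xi (act g (cls RR p)) = br g (xi (cls RR p))"
      unfolding act_c[OF g] xi_c by (rule Dxi[OF g])
  qed
  show "\<forall>k\<in>lcarrier (PL RR). \<forall>k'\<in>lcarrier (PL RR). act (xi k) k' = lbr (PL RR) k k'"
    unfolding PL_carrier forall_range
  proof (intro allI)
    fix p p'
    show "act (xi (cls RR p)) (cls RR p') = lbr (PL RR) (cls RR p) (cls RR p')"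
      unfolding xi_c act_c[OF Fh_cl] PL_br by (rule cls_eqI) (rule E2[rule_format])
  qed
  show "\<forall>k\<in>lcarrier (PL RR). xi k = lzero G \<longrightarrow> lsmult (PL RR) (of_int q) k = lzero (PL RR)"
    unfolding PL_carrier forall_range
  proof (intro allI impI)
    fix p assume "xi (cls RR p) = lzero G"
    then have "Fh p = lzero G" by (simp add: xi_c)
    then have "fm_smult sg p - cu (lzero G) \<in> I" using Fker[of p] by simp
    then have "fm_smult sg p - cu (lzero G) + cu (lzero G) \<in> I" using Lcu0 by (rule I_add)
    then have "fm_smult sg p - 0 \<in> I" by simp
    then show "lsmult (PL RR) (of_int q) (cls RR p) = lzero (PL RR)" by (simp add: cls_eq)
  qed
qed

theorem main:
  "lie_action G (PL RR) act \<and>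
   (\<forall>g'\<in>C. \<forall>h\<in>H. \<forall>g\<in>C. act g' (presented_gen RR (QT h g)) =
      ladd (PL RR) (presented_gen RR (QT (br g' h) g)) (presented_gen RR (QT h (br g' g)))) \<and>
   (\<forall>g\<in>C. \<forall>h\<in>H. act g (presented_gen RR (QC h)) = presented_gen RR (QC (br g h))) \<and>
   lie_hom (PL RR) G xi \<and>
   (\<forall>h\<in>H. \<forall>g\<in>C. xi (presented_gen RR (QT h g)) = br h g) \<and>
   (\<forall>h\<in>H. xi (presented_gen RR (QC h)) = sm (of_int q) h) \<and>
   q_crossed_module q (PL RR) G xi act"
proof (intro conjI ballI)
  show "lie_action G (PL RR) act" by (rule LA)
  show "lie_hom (PL RR) G xi" by (rule XH)
  show "q_crossed_module q (PL RR) G xi act" by (rule QCM)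
next
  fix g' h g assume a: "g' \<in> C" "h \<in> H" "g \<in> C"
  show "act g' (presented_gen RR (QT h g)) =
      ladd (PL RR) (presented_gen RR (QT (br g' h) g)) (presented_gen RR (QT h (br g' g)))"
    unfolding presented_gen_def act_c[OF a(1)] PL_add using a by simp
next
  fix g h assume a: "g \<in> C" "h \<in> H"
  show "act g (presented_gen RR (QC h)) = presented_gen RR (QC (br g h))"
    unfolding presented_gen_def act_c[OF a(1)] using a by simp
next
  fix h g assume a: "h \<in> H" "g \<in> C"
  show "xi (presented_gen RR (QT h g)) = br h g"
    unfolding presented_gen_def xi_c using a by simp
next
  fix h assume a: "h \<in> H"
  show "xi (presented_gen RR (QC h)) = sm (of_int q) h"
    unfolding presented_gen_def xi_c using a by simp
qed

end

theorem proposition2p5: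
  fixes G :: "('a, 'r::comm_ring_1) lie" and H :: "'a set" and q :: int
  assumes "lie_algebra G" and "lie_ideal G H" and "q \<ge> 1"
  shows "(\<exists>act \<xi>.
            lie_action G (qtensor G H q) act \<and>
            (\<forall>g'\<in>lcarrier G. \<forall>h\<in>H. \<forall>g\<in>lcarrier G.
               act g' (tens G H q h g) =
               ladd (qtensor G H q) (tens G H q (lbr G g' h) g) (tens G H q h (lbr G g' g))) \<and>
            (\<forall>g\<in>lcarrier G. \<forall>h\<in>H. act g (tcurl G H q h) = tcurl G H q (lbr G g h)) \<and>
            lie_hom (qtensor G H q) G \<xi> \<and>
            (\<forall>h\<in>H. \<forall>g\<in>lcarrier G. \<xi> (tens G H q h g) = lbr G h g) \<and>
            (\<forall>h\<in>H. \<xi> (tcurl G H q h) = lsmult G (of_int q) h) \<and>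
            q_crossed_module q (qtensor G H q) G \<xi> act)
       \<and> (\<exists>act \<xi>.
            lie_action G (qwedge G H q) act \<and>
            (\<forall>g'\<in>lcarrier G. \<forall>h\<in>H. \<forall>g\<in>lcarrier G.
               act g' (wedg G H q h g) =
               ladd (qwedge G H q) (wedg G H q (lbr G g' h) g) (wedg G H q h (lbr G g' g))) \<and>
            (\<forall>g\<in>lcarrier G. \<forall>h\<in>H. act g (wcurl G H q h) = wcurl G H q (lbr G g h)) \<and>
            lie_hom (qwedge G H q) G \<xi> \<and>
            (\<forall>h\<in>H. \<forall>g\<in>lcarrier G. \<xi> (wedg G H q h g) = lbr G h g) \<and>
            (\<forall>h\<in>H. \<xi> (wcurl G H q h) = lsmult G (of_int q) h) \<and>
            q_crossed_module q (qwedge G H q) G \<xi> act)"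
proof -
  interpret T: qsetup G H q "{}"
    by unfold_locales (use assms in auto)
  interpret W: qsetup G H q "{fm_gen (QT h h) | h. h \<in> H}"
    by unfold_locales (use assms in auto)
  have eqT: "qtensor_rels G H q \<union> {} = qtensor_rels G H q" by simp
  have t: "lie_action G (qtensor G H q) T.act \<and>
   (\<forall>g'\<in>lcarrier G. \<forall>h\<in>H. \<forall>g\<in>lcarrier G. T.act g' (tens G H q h g) =
      ladd (qtensor G H q) (tens G H q (lbr G g' h) g) (tens G H q h (lbr G g' g))) \<and>
   (\<forall>g\<in>lcarrier G. \<forall>h\<in>H. T.act g (tcurl G H q h) = tcurl G H q (lbr G g h)) \<and>
   lie_hom (qtensor G H q) G T.xi \<and>
   (\<forall>h\<in>H. \<forall>g\<in>lcarrier G. T.xi (tens G H q h g) = lbr G h g) \<and>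
   (\<forall>h\<in>H. T.xi (tcurl G H q h) = lsmult G (of_int q) h) \<and>
   q_crossed_module q (qtensor G H q) G T.xi T.act"
    using T.main unfolding eqT qtensor_def tens_def tcurl_def .
  have w: "lie_action G (qwedge G H q) W.act \<and>
   (\<forall>g'\<in>lcarrier G. \<forall>h\<in>H. \<forall>g\<in>lcarrier G. W.act g' (wedg G H q h g) =
      ladd (qwedge G H q) (wedg G H q (lbr G g' h) g) (wedg G H q h (lbr G g' g))) \<and>
   (\<forall>g\<in>lcarrier G. \<forall>h\<in>H. W.act g (wcurl G H q h) = wcurl G H q (lbr G g h)) \<and>
   lie_hom (qwedge G H q) G W.xi \<and>
   (\<forall>h\<in>H. \<forall>g\<in>lcarrier G. W.xi (wedg G H q h g) = lbr G h g) \<and>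
   (\<forall>h\<in>H. W.xi (wcurl G H q h) = lsmult G (of_int q) h) \<and>
   q_crossed_module q (qwedge G H q) G W.xi W.act"
    using W.main unfolding qwedge_rels_def[symmetric] qwedge_def[symmetric] wedg_def[symmetric] wcurl_def[symmetric] .
  show ?thesis
    apply (rule conjI)
     apply (rule exI[of _ T.act], rule exI[of _ T.xi], rule t)
    apply (rule exI[of _ W.act], rule exI[of _ W.xi], rule w)
    done
qed

end
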